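(* Let $\mathbf{M}$ be a compact smooth submanifold without boundary of $\mathbf{R}^s$ with cutlocus $\mathbf{C}$ and nearest-point mapping $\pi:\mathbf{R}^s\setminus\mathbf{C}\to\mathbf{M}$. For every $t\notin\mathbf{C}$, $$\|\pi'(t)\|\le\frac{d(t,\mathbf{M})}{d(t,\mathbf{C})}+1.$$
   Context: $\|\cdot\|$ on matrices is the operator norm; $\pi'(t)$ is the derivative (Jacobian matrix) of $\pi$ at $t$; $d(t,A)=\inf_{a\in A}\|t-a\|$. The cutlocus $\mathbf{C}$ is the set of $x\in\mathbf{R}^s$ for which the minimizer of $L_x(\mu)=\|\mu-x\|^2$ over $\mathbf{M}$ is not unique or $L_x$ has a degenerate Hessian at its minimizer; $\pi(x)=\arg\min_{\mu\in\mathbf{M}}\|\mu-x\|$ for $x\notin\mathbf{C}$ ($\pi$ is differentiable there). *)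

theory Defs
  imports "HOL-Analysis.Analysis"
begin

text \<open>C-infinity smoothness on an open set U: there is a family of iterated
  derivatives D, indexed by lists of directions, with D [] = f on U and such that
  each D vs is Frechet differentiable at every point of U with derivative
  h maps to D (h # vs) x.  (All orders of Frechet derivatives exist on U.)\<close>
definition smooth_on :: "'a::euclidean_space set \<Rightarrow> ('a \<Rightarrow> 'b::euclidean_space) \<Rightarrow> bool" where
  "smooth_on U f \<longleftrightarrow> open U \<and>
     (\<exists>D :: 'a list \<Rightarrow> 'a \<Rightarrow> 'b.
        (\<forall>x\<in>U. D [] x = f x) \<and>
        (\<forall>vs. \<forall>x\<in>U. (D vs has_derivative (\<lambda>h. D (h # vs) x)) (at x)))"

text \<open>Local graph chart of M at p: near p, M is the graph over the affine
  subspace p + T of a smooth map g with values orthogonal to T.\<close>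
definition graph_chart :: "'a::euclidean_space set \<Rightarrow> 'a \<Rightarrow> 'a set \<Rightarrow> 'a set \<Rightarrow> ('a \<Rightarrow> 'a) \<Rightarrow> bool" where
  "graph_chart M p U T g \<longleftrightarrow>
     open U \<and> p \<in> U \<and> subspace T \<and> smooth_on UNIV g \<and>
     (\<forall>v\<in>T. \<forall>w\<in>T. g v \<bullet> w = 0) \<and>
     M \<inter> U = {p + v + g v | v. v \<in> T} \<inter> U"

definition smooth_submanifold :: "'a::euclidean_space set \<Rightarrow> bool" where
  "smooth_submanifold M \<longleftrightarrow> (\<forall>p\<in>M. \<exists>U T g. graph_chart M p U T g)"

definition second_deriv_at :: "('a::euclidean_space \<Rightarrow> real) \<Rightarrow> 'a \<Rightarrow> ('a \<Rightarrow> 'a \<Rightarrow> real) \<Rightarrow> bool" where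
  "second_deriv_at f a H \<longleftrightarrow>
     (\<exists>f'. (\<forall>\<^sub>F y in nhds a. (f has_derivative f' y) (at y)) \<and>
           (\<forall>w. ((\<lambda>y. f' y w) has_derivative (\<lambda>v. H v w)) (at a)))"

definition is_minimizer :: "'a::euclidean_space set \<Rightarrow> 'a \<Rightarrow> 'a \<Rightarrow> bool" where
  "is_minimizer M x \<mu> \<longleftrightarrow> \<mu> \<in> M \<and> (\<forall>\<nu>\<in>M. (norm (\<mu> - x))\<^sup>2 \<le> (norm (\<nu> - x))\<^sup>2)"

text \<open>The Hessian of L_x restricted to M is degenerate at mu, computed in a local
  graph chart at mu (at a critical point nondegeneracy is chart independent).\<close>
definition degenerate_hessian :: "'a::euclidean_space set \<Rightarrow> 'a \<Rightarrow> 'a \<Rightarrow> bool" where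
  "degenerate_hessian M x \<mu> \<longleftrightarrow>
     (\<exists>U T g H. graph_chart M \<mu> U T g \<and>
        second_deriv_at (\<lambda>v. (norm (\<mu> + v + g v - x))\<^sup>2) 0 H \<and>
        (\<exists>v\<in>T. v \<noteq> 0 \<and> (\<forall>w\<in>T. H v w = 0)))"

definition cutlocus :: "'a::euclidean_space set \<Rightarrow> 'a set" where
  "cutlocus M = {x. \<not> (\<exists>!\<mu>. is_minimizer M x \<mu>) \<or>
                    (\<exists>\<mu>. is_minimizer M x \<mu> \<and> degenerate_hessian M x \<mu>)}"

definition nearest :: "'a::euclidean_space set \<Rightarrow> 'a \<Rightarrow> 'a" where
  "nearest M x = (THE \<mu>. is_minimizer M x \<mu>)"

end

theory Submission
  imports Defs
begin

lemma nsq: "(norm (a - b))\<^sup>2 = (norm a)\<^sup>2 - 2 * (a \<bullet> b) + (norm (b::'a::real_inner))\<^sup>2"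
  by (simp add: power2_norm_eq_inner algebra_simps inner_commute)

lemma tube:
  fixes F :: "'p::heine_borel \<times> 'k::metric_space \<Rightarrow> real"
  assumes K: "compact K" and cont: "continuous_on (cball a 1 \<times> K) F" and pos: "\<forall>k\<in>K. F (a,k) > 0"
  shows "\<exists>\<delta>>0. \<forall>p k. dist p a < \<delta> \<longrightarrow> k \<in> K \<longrightarrow> F (p,k) > 0"
proof (cases "K = {}")
  case True then show ?thesis by (auto intro: exI[of _ 1])
next
  case False
  have c1: "continuous_on K (\<lambda>k. F (a,k))"
    by (rule continuous_on_compose2[OF cont]) (auto intro!: continuous_intros)
  obtain k0 where k0: "k0 \<in> K" "\<forall>k\<in>K. F (a,k0) \<le> F (a,k)"
    using continuous_attains_inf[OF K False c1] by auto
  define c where "c = F (a,k0)"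
  have cpos: "c > 0" using pos k0 c_def by auto
  have uc: "uniformly_continuous_on (cball a 1 \<times> K) F"
    by (rule compact_uniformly_continuous[OF cont]) (simp add: compact_Times K)
  then obtain d where d: "d > 0" "\<forall>x\<in>cball a 1 \<times> K. \<forall>x'\<in>cball a 1 \<times> K. dist x' x < d \<longrightarrow> dist (F x') (F x) < c"
    unfolding uniformly_continuous_on_def using cpos by metis
  show ?thesis
  proof (intro exI[of _ "min d 1"] conjI allI impI)
    fix p k assume p: "dist p a < min d 1" and k: "k \<in> K"
    have "(p,k) \<in> cball a 1 \<times> K" "(a,k) \<in> cball a 1 \<times> K" using p k by (auto simp: dist_commute)
    moreover have "dist (p,k) (a,k) < d" using p by (simp add: dist_Pair_Pair)
    ultimately have "dist (F (p,k)) (F (a,k)) < c" using d by blast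
    moreover have "F (a,k) \<ge> c" using k0 k c_def by auto
    ultimately show "F (p,k) > 0" by (simp add: dist_real_def)
  qed (use d in auto)
qed

lemma second_order_pos:
  fixes \<psi> \<psi>1 :: "real \<Rightarrow> real"
  assumes d: "\<forall>\<^sub>F \<tau> in nhds 0. (\<psi> has_real_derivative \<psi>1 \<tau>) (at \<tau>)"
    and d1: "(\<psi>1 has_real_derivative a) (at 0)"
    and lb: "\<forall>\<^sub>F \<tau> in nhds 0. \<psi> \<tau> - \<psi> 0 \<ge> c * \<tau>\<^sup>2" and c: "c > 0"
  shows "a > 0"
proof (rule ccontr)
  assume a: "\<not> a > 0"
  have "\<forall>\<^sub>F \<tau> in nhds 0. (\<psi> has_real_derivative \<psi>1 \<tau>) (at \<tau>) \<and> \<psi> \<tau> - \<psi> 0 \<ge> c * \<tau>\<^sup>2"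
    using d lb by (rule eventually_conj)
  then obtain e where e: "e > 0" "\<And>\<tau>. dist \<tau> 0 < e \<Longrightarrow> (\<psi> has_real_derivative \<psi>1 \<tau>) (at \<tau>) \<and> \<psi> \<tau> - \<psi> 0 \<ge> c * \<tau>\<^sup>2"
    unfolding eventually_nhds_metric by blast
  have z: "\<psi>1 0 = 0"
  proof -
    have D0: "(\<psi> has_real_derivative \<psi>1 0) (at 0)" using e by auto
    have "\<forall>y. \<bar>0 - y\<bar> < e \<longrightarrow> \<psi> 0 \<le> \<psi> y"
    proof (intro allI impI)
      fix y :: real assume "\<bar>0 - y\<bar> < e"
      then have "\<psi> y - \<psi> 0 \<ge> c * y\<^sup>2" using e by (auto simp: dist_real_def)
      moreover have "c * y\<^sup>2 \<ge> 0" using c by auto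
      ultimately show "\<psi> 0 \<le> \<psi> y" by linarith
    qed
    then show ?thesis using DERIV_local_min[OF D0 e(1)] by simp
  qed
  have "(\<psi>1 has_derivative (*) a) (at 0)" using d1 by (rule has_field_derivative_imp_has_derivative)
  then obtain \<delta> where \<delta>: "\<delta> > 0" "\<And>y. norm (y - 0) < \<delta> \<Longrightarrow> norm (\<psi>1 y - \<psi>1 0 - a * (y - 0)) \<le> (c/2) * norm (y - 0)"
    unfolding has_derivative_at_alt using c by (metis half_gt_zero)
  define \<tau> where "\<tau> = min e \<delta> / 2"
  have tau: "\<tau> > 0" "\<tau> < e" "\<tau> < \<delta>" using e \<delta> by (auto simp: \<tau>_def)
  have "\<exists>l z. 0 < z \<and> z < \<tau> \<and> DERIV \<psi> z :> l \<and> \<psi> \<tau> - \<psi> 0 = (\<tau> - 0) * l"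
  proof (rule MVT)
    show "continuous_on {0..\<tau>} \<psi>"
    proof (intro continuous_at_imp_continuous_on ballI)
      fix x assume "x \<in> {0..\<tau>}"
      then have "(\<psi> has_real_derivative \<psi>1 x) (at x)" using e tau by (auto simp: dist_real_def)
      then show "isCont \<psi> x" by (rule DERIV_isCont)
    qed
    show "\<And>x. 0 < x \<Longrightarrow> x < \<tau> \<Longrightarrow> \<psi> differentiable (at x)"
    proof -
      fix x :: real assume "0 < x" "x < \<tau>"
      then have "(\<psi> has_real_derivative \<psi>1 x) (at x)" using e tau by (auto simp: dist_real_def)
      then show "\<psi> differentiable (at x)" by (auto simp: real_differentiable_def)
    qed
  qed (use tau in auto)
  then obtain l z where z1: "0 < z" "z < \<tau>" "DERIV \<psi> z :> l" "\<psi> \<tau> - \<psi> 0 = \<tau> * l" by auto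
  have "l = \<psi>1 z" using z1 e tau by (intro DERIV_unique[OF z1(3)]) (auto simp: dist_real_def)
  moreover have "\<psi>1 z \<le> a * z + (c/2) * z" proof -
    have "\<bar>\<psi>1 z - a * z\<bar> \<le> (c/2) * z" using \<delta>(2)[of z] z1 tau z by auto
    then show ?thesis by linarith
  qed
  ultimately have "l \<le> (c/2) * z" using a z1 by (smt (verit) mult_nonpos_nonneg)
  then have "\<psi> \<tau> - \<psi> 0 \<le> \<tau> * ((c/2) * z)" using z1 tau by (simp add: mult_left_mono)
  also have "\<dots> < c * \<tau>\<^sup>2" using z1 tau c by (simp add: power2_eq_square)
  finally show False using e(2)[of \<tau>] tau by (auto simp: dist_real_def)
qed

lemma sq_identity:
  fixes z m y :: "'a::real_inner"
  shows "(norm (z - (m + \<theta> *\<^sub>R (y - m))))\<^sup>2 - (norm (m - (m + \<theta> *\<^sub>R (y - m))))\<^sup>2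
    = (1 - \<theta>) * (norm (z - m))\<^sup>2 + \<theta> * ((norm (z - y))\<^sup>2 - (norm (m - y))\<^sup>2)"
  unfolding power2_norm_eq_inner
  by (simp add: inner_diff_left inner_diff_right inner_add_left inner_add_right
      algebra_simps inner_commute)

lemma chart_g0:
  assumes ch: "graph_chart M m U T g" and mM: "m \<in> M"
  shows "g 0 = 0"
proof -
  have "m \<in> M \<inter> U" using ch mM unfolding graph_chart_def by blast
  then have "m \<in> {m + v + g v |v. v \<in> T}" using ch unfolding graph_chart_def by blast
  then obtain v0 where v0: "v0 \<in> T" "m = m + v0 + g v0" by blast
  have "g v0 \<bullet> v0 = 0" using ch v0 by (auto simp: graph_chart_def)
  moreover have "v0 + g v0 = 0" using v0(2) by (metis add.assoc add_cancel_right_right)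
  then have "v0 = - g v0" by (simp add: eq_neg_iff_add_eq_0)
  ultimately have "v0 \<bullet> v0 = 0" by (metis inner_minus_left neg_equal_0_iff_equal)
  then have "v0 = 0" by simp
  then show ?thesis using v0 by simp
qed

lemma smooth_cont:
  assumes "smooth_on UNIV g"
  shows "continuous_on UNIV g"
proof -
  obtain D where D: "\<forall>x. D [] x = g x" "\<forall>vs x. (D vs has_derivative (\<lambda>h. D (h # vs) x)) (at x)"
    using assms unfolding smooth_on_def by auto
  have "g = D []" using D by auto
  then show ?thesis using D(2) by (auto intro!: continuous_at_imp_continuous_on has_derivative_continuous)
qed

lemma N_pos:
  fixes M :: "'a::euclidean_space set"
  assumes ch: "graph_chart M m U T g"
    and ymin: "is_minimizer M y m" and th: "0 \<le> \<theta>" "\<theta> < 1"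
    and sd: "second_deriv_at (\<lambda>v. (norm (m + v + g v - (m + \<theta> *\<^sub>R (y - m))))\<^sup>2) 0 H"
    and v: "v \<in> T" "v \<noteq> 0"
  shows "H v v > 0"
proof -
  define x where "x = m + \<theta> *\<^sub>R (y - m)"
  define f where "f = (\<lambda>v. (norm (m + v + g v - x))\<^sup>2)"
  have mM: "m \<in> M" using ymin by (simp add: is_minimizer_def)
  have g0: "g 0 = 0" by (rule chart_g0[OF ch mM])
  have gc: "continuous_on UNIV g" using ch by (auto simp: graph_chart_def intro: smooth_cont)
  obtain f' where f': "\<forall>\<^sub>F z in nhds 0. (f has_derivative f' z) (at z)"
    "\<forall>w. ((\<lambda>z. f' z w) has_derivative (\<lambda>u. H u w)) (at 0)"
    using sd unfolding second_deriv_at_def f_def x_def by blast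
  obtain e where e: "e > 0" "\<And>z. dist z 0 < e \<Longrightarrow> (f has_derivative f' z) (at z)"
    using f'(1) unfolding eventually_nhds_metric by blast
  have nv: "norm v > 0" using v by simp
  define \<psi> where "\<psi> = (\<lambda>\<tau>::real. f (\<tau> *\<^sub>R v))"
  define \<psi>1 where "\<psi>1 = (\<lambda>\<tau>::real. f' (\<tau> *\<^sub>R v) v)"
  have dpsi: "\<forall>\<^sub>F \<tau> in nhds 0. (\<psi> has_real_derivative \<psi>1 \<tau>) (at \<tau>)"
    unfolding eventually_nhds_metric
  proof (intro exI[of _ "e / norm v"] conjI allI impI)
    show "e / norm v > 0" using e nv by simp
    fix \<tau> :: real assume "dist \<tau> 0 < e / norm v"
    then have "dist (\<tau> *\<^sub>R v) 0 < e" using nv by (simp add: dist_real_def pos_less_divide_eq)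
    then have fd: "(f has_derivative f' (\<tau> *\<^sub>R v)) (at (\<tau> *\<^sub>R v))" using e by auto
    have lin: "linear (f' (\<tau> *\<^sub>R v))" using fd by (rule has_derivative_linear)
    have "((\<lambda>s. f (s *\<^sub>R v)) has_derivative (\<lambda>s. f' (\<tau> *\<^sub>R v) (s *\<^sub>R v))) (at \<tau>)"
      by (rule has_derivative_compose[where g=f and f="\<lambda>s. s *\<^sub>R v", OF _ fd]) (auto intro!: derivative_eq_intros)
    then show "(\<psi> has_real_derivative \<psi>1 \<tau>) (at \<tau>)"
      unfolding \<psi>_def \<psi>1_def
      by (rule has_derivative_imp_has_field_derivative) (simp add: linear_cmul[OF lin])
  qed
  have dpsi1: "(\<psi>1 has_real_derivative H v v) (at 0)"
  proof -
    have hd: "((\<lambda>z. f' z v) has_derivative (\<lambda>u. H u v)) (at (0 *\<^sub>R v))" using f'(2) by simp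
    have lin: "linear (\<lambda>u. H u v)" using f'(2) has_derivative_linear by blast
    have "((\<lambda>s. f' (s *\<^sub>R v) v) has_derivative (\<lambda>s. H (s *\<^sub>R v) v)) (at 0)"
      by (rule has_derivative_compose[where g="\<lambda>z. f' z v" and f="\<lambda>s. s *\<^sub>R v", OF _ hd]) (auto intro!: derivative_eq_intros)
    then show ?thesis unfolding \<psi>1_def
      by (rule has_derivative_imp_has_field_derivative) (simp add: linear_cmul[OF lin])
  qed
  have \<phi>c: "continuous (at 0) (\<lambda>\<tau>::real. m + \<tau> *\<^sub>R v + g (\<tau> *\<^sub>R v))"
  proof -
    have "isCont g (0 *\<^sub>R v)" using gc by (simp add: continuous_on_eq_continuous_at)
    moreover have "isCont (\<lambda>\<tau>::real. \<tau> *\<^sub>R v) 0" by (intro continuous_intros)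
    ultimately have "isCont (\<lambda>\<tau>::real. g (\<tau> *\<^sub>R v)) 0" using isCont_o2[where f="\<lambda>\<tau>::real. \<tau> *\<^sub>R v" and a=0 and g=g] by simp
    then show ?thesis by (intro continuous_intros)
  qed
  have "open U" "m \<in> U" using ch by (auto simp: graph_chart_def)
  then have evU: "\<forall>\<^sub>F \<tau> in nhds 0. m + \<tau> *\<^sub>R v + g (\<tau> *\<^sub>R v) \<in> U"
  proof -
    have "((\<lambda>\<tau>::real. m + \<tau> *\<^sub>R v + g (\<tau> *\<^sub>R v)) \<longlongrightarrow> m) (at 0)"
      using \<phi>c g0 unfolding continuous_at by simp
    then have "\<forall>\<^sub>F \<tau> in at 0. m + \<tau> *\<^sub>R v + g (\<tau> *\<^sub>R v) \<in> U"
      using \<open>open U\<close> \<open>m \<in> U\<close> by (rule topological_tendstoD)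
    then show ?thesis using \<open>m \<in> U\<close> g0 by (simp add: eventually_nhds_conv_at)
  qed
  have lb: "\<forall>\<^sub>F \<tau> in nhds 0. \<psi> \<tau> - \<psi> 0 \<ge> ((1 - \<theta>) * (norm v)\<^sup>2) * \<tau>\<^sup>2"
    using evU
  proof (rule eventually_mono)
    fix \<tau> :: real assume inU: "m + \<tau> *\<^sub>R v + g (\<tau> *\<^sub>R v) \<in> U"
    define z where "z = m + \<tau> *\<^sub>R v + g (\<tau> *\<^sub>R v)"
    have tv: "\<tau> *\<^sub>R v \<in> T" using ch v by (auto simp: graph_chart_def subspace_scale)
    have "z \<in> M" using ch inU tv unfolding graph_chart_def z_def by blast
    then have zy: "(norm (z - y))\<^sup>2 - (norm (m - y))\<^sup>2 \<ge> 0"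
      using ymin by (auto simp: is_minimizer_def norm_minus_commute)
    have orth: "g (\<tau> *\<^sub>R v) \<bullet> v = 0" using ch tv v by (auto simp: graph_chart_def)
    have "(norm (z - m))\<^sup>2 = \<tau>\<^sup>2 * (norm v)\<^sup>2 + (norm (g (\<tau> *\<^sub>R v)))\<^sup>2"
    proof -
      have "z - m = \<tau> *\<^sub>R v + g (\<tau> *\<^sub>R v)" unfolding z_def by simp
      then show ?thesis unfolding power2_norm_eq_inner using orth
        by (simp add: inner_add_left inner_add_right inner_commute power2_eq_square)
    qed
    then have zm: "(norm (z - m))\<^sup>2 \<ge> \<tau>\<^sup>2 * (norm v)\<^sup>2" by simp
    have "\<psi> \<tau> - \<psi> 0 = (1 - \<theta>) * (norm (z - m))\<^sup>2 + \<theta> * ((norm (z - y))\<^sup>2 - (norm (m - y))\<^sup>2)"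
      unfolding \<psi>_def f_def x_def z_def using sq_identity[of "m + \<tau> *\<^sub>R v + g (\<tau> *\<^sub>R v)" m \<theta> y] g0
      by (simp add: add.assoc)
    also have "\<dots> \<ge> (1 - \<theta>) * (\<tau>\<^sup>2 * (norm v)\<^sup>2)"
    proof -
      have "(1 - \<theta>) * (norm (z - m))\<^sup>2 \<ge> (1 - \<theta>) * (\<tau>\<^sup>2 * (norm v)\<^sup>2)"
        using zm th by (intro mult_left_mono) auto
      moreover have "\<theta> * ((norm (z - y))\<^sup>2 - (norm (m - y))\<^sup>2) \<ge> 0" using zy th by simp
      ultimately show ?thesis by linarith
    qed
    finally show "\<psi> \<tau> - \<psi> 0 \<ge> ((1 - \<theta>) * (norm v)\<^sup>2) * \<tau>\<^sup>2" by (simp add: algebra_simps)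
  qed
  show ?thesis
    by (rule second_order_pos[OF dpsi dpsi1 lb]) (use th nv in simp)
qed

lemma ray_unique:
  fixes m m' x :: "'a::euclidean_space"
  assumes xm: "is_minimizer M x m" and xm': "is_minimizer M x m'"
    and ym: "is_minimizer M (m + l *\<^sub>R (x - m)) m" and l: "l > 1"
  shows "m' = m"
proof -
  define a where "a = m' - m"
  define b where "b = x - m"
  have "m' \<in> M" "m \<in> M" using xm xm' by (auto simp: is_minimizer_def)
  have e1: "(norm (m - x))\<^sup>2 = (norm (m' - x))\<^sup>2"
    using xm xm' \<open>m' \<in> M\<close> \<open>m \<in> M\<close> unfolding is_minimizer_def by (meson antisym)
  have e2: "(norm (m - (m + l *\<^sub>R (x - m))))\<^sup>2 \<le> (norm (m' - (m + l *\<^sub>R (x - m))))\<^sup>2"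
    using ym \<open>m' \<in> M\<close> unfolding is_minimizer_def by blast
  have "m' - x = a - b" "m - x = - b" unfolding a_def b_def by auto
  then have "(norm a)\<^sup>2 = 2 * (a \<bullet> b)" using e1 nsq[of a b] by simp
  moreover have "m' - (m + l *\<^sub>R (x - m)) = a - l *\<^sub>R b" "m - (m + l *\<^sub>R (x - m)) = - (l *\<^sub>R b)"
    unfolding a_def b_def by (auto simp: algebra_simps)
  ultimately have n: "(norm (m' - (m + l *\<^sub>R (x - m))))\<^sup>2 = (norm a)\<^sup>2 - 2 * l * (a \<bullet> b) + l\<^sup>2 * (norm b)\<^sup>2"
      "(norm (m - (m + l *\<^sub>R (x - m))))\<^sup>2 = l\<^sup>2 * (norm b)\<^sup>2"
    using nsq[of a "l *\<^sub>R b"] by (auto simp: power_mult_distrib)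
  then have "(norm a)\<^sup>2 \<ge> 2 * l * (a \<bullet> b)" using e2 by linarith
  then have "(norm a)\<^sup>2 \<ge> l * (norm a)\<^sup>2" using \<open>(norm a)\<^sup>2 = 2 * (a \<bullet> b)\<close> by (simp add: algebra_simps)
  then have "(l - 1) * (norm a)\<^sup>2 \<le> 0" by (simp add: algebra_simps)
  then have "(norm a)\<^sup>2 \<le> 0" using l by (simp add: mult_le_0_iff)
  then show ?thesis unfolding a_def by simp
qed

lemma not_cut:
  fixes M :: "'a::euclidean_space set"
  assumes xm: "is_minimizer M x m" and ym: "is_minimizer M (m + l *\<^sub>R (x - m)) m" and l: "l > 1"
  shows "x \<notin> cutlocus M"
proof -
  have uniq: "\<And>m'. is_minimizer M x m' \<Longrightarrow> m' = m" using ray_unique[OF xm _ ym l] by blast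
  have nd: "\<not> degenerate_hessian M x m"
  proof
    assume "degenerate_hessian M x m"
    then obtain U T g H v where ch: "graph_chart M m U T g"
      and sd: "second_deriv_at (\<lambda>v. (norm (m + v + g v - x))\<^sup>2) 0 H"
      and v: "v \<in> T" "v \<noteq> 0" "\<forall>w\<in>T. H v w = 0"
      unfolding degenerate_hessian_def by blast
    have xe: "x = m + (1/l) *\<^sub>R ((m + l *\<^sub>R (x - m)) - m)" using l by simp
    have "H v v > 0"
      by (rule N_pos[OF ch ym _ _ _ v(1,2), of "1/l"]) (use l sd xe in auto)
    then show False using v by auto
  qed
  show ?thesis unfolding cutlocus_def using xm uniq nd by blast
qed


lemma lin_expand:
  fixes f :: "'a::euclidean_space \<Rightarrow> 'b::real_vector"
  assumes lf: "linear f"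
  shows "f w = (\<Sum>i\<in>Basis. (w \<bullet> i) *\<^sub>R f i)"
proof -
  have "f w = f (\<Sum>i\<in>Basis. (w \<bullet> i) *\<^sub>R i)" by (simp add: euclidean_representation)
  also have "\<dots> = (\<Sum>i\<in>Basis. (w \<bullet> i) *\<^sub>R f i)"
    by (simp add: linear_sum[OF lf] linear_cmul[OF lf] o_def)
  finally show ?thesis .
qed

locale cset =
  fixes M :: "'a::euclidean_space set" and t \<mu> :: 'a and U T :: "'a set"
    and g :: "'a \<Rightarrow> 'a" and D :: "'a list \<Rightarrow> 'a \<Rightarrow> 'a"
  assumes cM: "compact M"
    and tmin: "is_minimizer M t \<mu>"
    and ch: "graph_chart M \<mu> U T g"
    and D0: "\<And>x. D [] x = g x"
    and Dd: "\<And>vs x. (D vs has_derivative (\<lambda>h. D (h # vs) x)) (at x)"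
begin

definition \<phi> where "\<phi> z = \<mu> + z + g z"
definition J where "J w = w + D [w] 0"
definition q where "q z y w = (norm (w + D [w] z))\<^sup>2 + (\<phi> z - y) \<bullet> D [w, w] z"

lemma \<mu>M: "\<mu> \<in> M" using tmin by (simp add: is_minimizer_def)
lemma g0: "g 0 = 0" using chart_g0[OF ch \<mu>M] .
lemma \<phi>0: "\<phi> 0 = \<mu>" by (simp add: \<phi>_def g0)
lemma openU: "open U" and \<mu>U: "\<mu> \<in> U" and subT: "subspace T"
  and orthT: "\<And>v w. v \<in> T \<Longrightarrow> w \<in> T \<Longrightarrow> g v \<bullet> w = 0"
  and MU: "M \<inter> U = {\<mu> + v + g v | v. v \<in> T} \<inter> U"
  using ch by (auto simp: graph_chart_def)

lemma g_eq: "g = D []" using D0 by auto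

lemma linD: "linear (\<lambda>h. D (h # vs) x)" using Dd by (rule has_derivative_linear)

lemma Dcont: "isCont (D vs) x" using Dd by (rule has_derivative_continuous)
lemma Dcont_on: "continuous_on S (D vs)" by (simp add: Dcont continuous_at_imp_continuous_on)
lemma gcont: "isCont g x" using Dcont[where vs="[]" and x=x] g_eq by simp

lemma D1_expand: "D [w] z = (\<Sum>i\<in>Basis. (w \<bullet> i) *\<^sub>R D [i] z)"
  by (rule lin_expand[OF linD[where vs="[]" and x=z]])

lemma D2_expand1: "D (a # vs) z = (\<Sum>i\<in>Basis. (a \<bullet> i) *\<^sub>R D (i # vs) z)"
  by (rule lin_expand[OF linD[where vs=vs and x=z]])

lemma D2_expand2: "D [a, b] z = (\<Sum>i\<in>Basis. (b \<bullet> i) *\<^sub>R D [a, i] z)"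
proof -
  have e: "D [b] = (\<lambda>z. \<Sum>i\<in>Basis. (b \<bullet> i) *\<^sub>R D [i] z)" by (rule ext, rule D1_expand)
  have "(D [b] has_derivative (\<lambda>a. \<Sum>i\<in>Basis. (b \<bullet> i) *\<^sub>R D [a, i] z)) (at z)"
    unfolding e by (auto intro!: derivative_eq_intros Dd)
  then have "(\<lambda>a. D [a, b] z) = (\<lambda>a. \<Sum>i\<in>Basis. (b \<bullet> i) *\<^sub>R D [a, i] z)"
    by (rule has_derivative_unique[OF Dd[where vs="[b]" and x=z]])
  then show ?thesis by (rule fun_cong)
qed

lemma D2_expand: "D [w, w] z = (\<Sum>i\<in>Basis. (w \<bullet> i) *\<^sub>R (\<Sum>j\<in>Basis. (w \<bullet> j) *\<^sub>R D [j, i] z))"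
proof -
  have "D [w, w] z = (\<Sum>i\<in>Basis. (w \<bullet> i) *\<^sub>R D [w, i] z)" by (rule D2_expand2)
  also have "\<dots> = (\<Sum>i\<in>Basis. (w \<bullet> i) *\<^sub>R (\<Sum>j\<in>Basis. (w \<bullet> j) *\<^sub>R D [j, i] z))"
    by (rule sum.cong[OF refl]) (simp only: D2_expand1[where a=w])
  finally show ?thesis .
qed

lemma D1_scale: "D [c *\<^sub>R w] z = c *\<^sub>R D [w] z"
  using linear_cmul[OF linD[where vs="[]" and x=z]] by simp

lemma D2_scale: "D [c *\<^sub>R w, c *\<^sub>R w] z = (c * c) *\<^sub>R D [w, w] z"
proof -
  have "D [c *\<^sub>R w, c *\<^sub>R w] z = c *\<^sub>R D [w, c *\<^sub>R w] z"
    using linear_cmul[OF linD[where vs="[c *\<^sub>R w]" and x=z]] by simp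
  also have "D [w, c *\<^sub>R w] z = c *\<^sub>R D [w, w] z"
    unfolding D2_expand2[where a=w and b="c *\<^sub>R w" and z=z] D2_expand2[where a=w and b=w and z=z]
    by (simp add: scaleR_sum_right)
  finally show ?thesis by simp
qed

lemma q_scale: "q z y (c *\<^sub>R w) = c\<^sup>2 * q z y w"
proof -
  have "(norm (c *\<^sub>R w + D [c *\<^sub>R w] z))\<^sup>2 = c\<^sup>2 * (norm (w + D [w] z))\<^sup>2"
    by (simp add: D1_scale scaleR_add_right[symmetric] power_mult_distrib del: scaleR_add_right)
  then show ?thesis unfolding q_def by (simp add: D2_scale power2_eq_square algebra_simps)
qed

lemma phi_eq: "\<phi> = (\<lambda>z. \<mu> + z + D [] z)" by (auto simp: \<phi>_def D0)

lemma phi_d: "(\<phi> has_derivative (\<lambda>h. h + D [h] z)) (at z)"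
  unfolding phi_eq by (auto intro!: derivative_eq_intros Dd)

lemma D1_d: "((\<lambda>z. D [w] z) has_derivative (\<lambda>h. D [h, w] z)) (at z)"
  using Dd[of "[w]" z] by simp

lemma psi_d: "((\<lambda>\<tau>::real. (norm (\<phi> (z + \<tau> *\<^sub>R w) - y))\<^sup>2) has_real_derivative
    2 * ((\<phi> (z + \<tau> *\<^sub>R w) - y) \<bullet> (w + D [w] (z + \<tau> *\<^sub>R w)))) (at \<tau>)"
proof -
  have l: "linear (\<lambda>h. D [h] (z + \<tau> *\<^sub>R w))" using linD[where vs="[]"] by simp
  have d1: "((\<lambda>\<tau>::real. \<phi> (z + \<tau> *\<^sub>R w)) has_derivative (\<lambda>s. s *\<^sub>R w + D [s *\<^sub>R w] (z + \<tau> *\<^sub>R w))) (at \<tau>)"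
    by (rule has_derivative_compose[where g=\<phi> and f="\<lambda>\<tau>. z + \<tau> *\<^sub>R w", OF _ phi_d]) (auto intro!: derivative_eq_intros)
  have "((\<lambda>\<tau>::real. (\<phi> (z + \<tau> *\<^sub>R w) - y) \<bullet> (\<phi> (z + \<tau> *\<^sub>R w) - y)) has_derivative
     (\<lambda>s. (\<phi> (z + \<tau> *\<^sub>R w) - y) \<bullet> (s *\<^sub>R w + D [s *\<^sub>R w] (z + \<tau> *\<^sub>R w)) + (s *\<^sub>R w + D [s *\<^sub>R w] (z + \<tau> *\<^sub>R w)) \<bullet> (\<phi> (z + \<tau> *\<^sub>R w) - y))) (at \<tau>)"
    by (rule has_derivative_inner) (auto intro!: derivative_eq_intros d1)
  then show ?thesis unfolding power2_norm_eq_inner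
    by (rule has_derivative_imp_has_field_derivative)
       (simp add: linear_cmul[OF l] inner_commute inner_add_right inner_add_left algebra_simps)
qed

lemma psi1_d: "((\<lambda>\<tau>::real. (\<phi> (z + \<tau> *\<^sub>R w) - y) \<bullet> (w + D [w] (z + \<tau> *\<^sub>R w))) has_real_derivative
    q (z + \<tau> *\<^sub>R w) y w) (at \<tau>)"
proof -
  have l: "linear (\<lambda>h. D [h] (z + \<tau> *\<^sub>R w))" using linD[where vs="[]"] by simp
  have l2: "linear (\<lambda>h. D [h, w] (z + \<tau> *\<^sub>R w))" using linD[where vs="[w]"] by simp
  have d1: "((\<lambda>\<tau>::real. \<phi> (z + \<tau> *\<^sub>R w)) has_derivative (\<lambda>s. s *\<^sub>R w + D [s *\<^sub>R w] (z + \<tau> *\<^sub>R w))) (at \<tau>)"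
    by (rule has_derivative_compose[where g=\<phi> and f="\<lambda>\<tau>. z + \<tau> *\<^sub>R w", OF _ phi_d]) (auto intro!: derivative_eq_intros)
  have d2: "((\<lambda>\<tau>::real. D [w] (z + \<tau> *\<^sub>R w)) has_derivative (\<lambda>s. D [s *\<^sub>R w, w] (z + \<tau> *\<^sub>R w))) (at \<tau>)"
    by (rule has_derivative_compose[where g="D [w]" and f="\<lambda>\<tau>. z + \<tau> *\<^sub>R w", OF _ D1_d]) (auto intro!: derivative_eq_intros)
  have "((\<lambda>\<tau>::real. (\<phi> (z + \<tau> *\<^sub>R w) - y) \<bullet> (w + D [w] (z + \<tau> *\<^sub>R w))) has_derivative
     (\<lambda>s. (\<phi> (z + \<tau> *\<^sub>R w) - y) \<bullet> (D [s *\<^sub>R w, w] (z + \<tau> *\<^sub>R w)) + (s *\<^sub>R w + D [s *\<^sub>R w] (z + \<tau> *\<^sub>R w)) \<bullet> (w + D [w] (z + \<tau> *\<^sub>R w)))) (at \<tau>)"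
  proof (rule has_derivative_inner)
    show "((\<lambda>\<tau>::real. \<phi> (z + \<tau> *\<^sub>R w) - y) has_derivative (\<lambda>s. s *\<^sub>R w + D [s *\<^sub>R w] (z + \<tau> *\<^sub>R w))) (at \<tau>)"
      by (rule has_derivative_eq_rhs[OF has_derivative_diff[OF d1 has_derivative_const]]) simp
    show "((\<lambda>\<tau>::real. w + D [w] (z + \<tau> *\<^sub>R w)) has_derivative (\<lambda>s. D [s *\<^sub>R w, w] (z + \<tau> *\<^sub>R w))) (at \<tau>)"
      by (rule has_derivative_eq_rhs[OF has_derivative_add[OF has_derivative_const d2]]) simp
  qed
  then show ?thesis unfolding q_def power2_norm_eq_inner
    by (rule has_derivative_imp_has_field_derivative)
       (simp add: linear_cmul[OF l] linear_cmul[OF l2] inner_commute inner_add_right inner_add_left algebra_simps)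
qed

end


context cset
begin

lemma Dcomp_cont [continuous_intros]: "isCont f x \<Longrightarrow> isCont (\<lambda>p. D vs (f p)) x"
  using isCont_o2[where f=f and a=x and g="D vs"] Dcont by blast

lemma D1_orth:
  assumes z: "z \<in> T" and w: "w \<in> T" and u: "u \<in> T"
  shows "D [w] z \<bullet> u = 0"
proof -
  have l: "linear (\<lambda>h. D [h] z)" using linD[where vs="[]" and x=z] by simp
  have "((\<lambda>\<tau>::real. g (z + \<tau> *\<^sub>R w)) has_derivative (\<lambda>s. D [s *\<^sub>R w] (z + 0 *\<^sub>R w))) (at 0)"
    unfolding g_eq
    by (rule has_derivative_compose[where g="D []" and f="\<lambda>\<tau>. z + \<tau> *\<^sub>R w", OF _ Dd]) (auto intro!: derivative_eq_intros)
  then have "((\<lambda>\<tau>::real. g (z + \<tau> *\<^sub>R w) \<bullet> u) has_derivative (\<lambda>s. D [s *\<^sub>R w] z \<bullet> u)) (at 0)"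
    by (auto intro!: derivative_eq_intros)
  then have d1: "((\<lambda>\<tau>::real. g (z + \<tau> *\<^sub>R w) \<bullet> u) has_real_derivative (D [w] z \<bullet> u)) (at 0)"
    by (rule has_derivative_imp_has_field_derivative) (simp add: linear_cmul[OF l])
  have "(\<lambda>\<tau>::real. g (z + \<tau> *\<^sub>R w) \<bullet> u) = (\<lambda>_. 0)"
  proof
    fix \<tau> :: real
    have "z + \<tau> *\<^sub>R w \<in> T" using z w subT by (simp add: subspace_add subspace_scale)
    then show "g (z + \<tau> *\<^sub>R w) \<bullet> u = 0" using orthT u by blast
  qed
  then have d2: "((\<lambda>\<tau>::real. g (z + \<tau> *\<^sub>R w) \<bullet> u) has_real_derivative 0) (at 0)" by simp
  show ?thesis using DERIV_unique[OF d1 d2] .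
qed

lemma J_norm: assumes "w \<in> T" shows "(norm (J w))\<^sup>2 = (norm w)\<^sup>2 + (norm (D [w] 0))\<^sup>2"
proof -
  have "D [w] 0 \<bullet> w = 0" using D1_orth[of 0 w w] assms subT by (simp add: subspace_0)
  then show ?thesis unfolding J_def power2_norm_eq_inner by (simp add: inner_add_left inner_add_right inner_commute)
qed

lemma J_ge: "w \<in> T \<Longrightarrow> (norm w)\<^sup>2 \<le> (norm (J w))\<^sup>2" using J_norm by simp

lemma phi_cont: "isCont \<phi> x" unfolding phi_eq by (intro continuous_intros)

lemma ev_U:
  assumes "\<phi> z \<in> U"
  shows "\<forall>\<^sub>F \<tau> in nhds (0::real). \<phi> (z + \<tau> *\<^sub>R u) \<in> U"
proof -
  have c: "isCont (\<lambda>\<tau>::real. \<phi> (z + \<tau> *\<^sub>R u)) 0"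
    using isCont_o2[where f="\<lambda>\<tau>::real. z + \<tau> *\<^sub>R u" and a=0 and g=\<phi>] phi_cont by (auto intro!: continuous_intros)
  then have "((\<lambda>\<tau>::real. \<phi> (z + \<tau> *\<^sub>R u)) \<longlongrightarrow> \<phi> z) (at 0)" unfolding isCont_def by simp
  then have "\<forall>\<^sub>F \<tau> in at 0. \<phi> (z + \<tau> *\<^sub>R u) \<in> U" using openU assms by (rule topological_tendstoD)
  then show ?thesis using assms by (simp add: eventually_nhds_conv_at)
qed

lemma phi_in_M: "z \<in> T \<Longrightarrow> \<phi> z \<in> U \<Longrightarrow> \<phi> z \<in> M"
  using MU unfolding \<phi>_def by blast

lemma crit:
  assumes z: "z \<in> T" and zU: "\<phi> z \<in> U" and xm: "is_minimizer M x (\<phi> z)" and u: "u \<in> T"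
  shows "(\<phi> z - x) \<bullet> (u + D [u] z) = 0"
proof -
  obtain e where e: "e > 0" "\<And>\<tau>. dist \<tau> 0 < e \<Longrightarrow> \<phi> (z + \<tau> *\<^sub>R u) \<in> U"
    using ev_U[OF zU, of u] unfolding eventually_nhds_metric by blast
  have "2 * ((\<phi> (z + 0 *\<^sub>R u) - x) \<bullet> (u + D [u] (z + 0 *\<^sub>R u))) = 0"
  proof (rule DERIV_local_min[OF psi_d e(1)], intro allI impI)
    fix \<tau> :: real assume "\<bar>0 - \<tau>\<bar> < e"
    then have "\<phi> (z + \<tau> *\<^sub>R u) \<in> U" using e by (auto simp: dist_real_def)
    moreover have "z + \<tau> *\<^sub>R u \<in> T" using z u subT by (simp add: subspace_add subspace_scale)
    ultimately have "\<phi> (z + \<tau> *\<^sub>R u) \<in> M" by (rule phi_in_M[rotated])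
    then show "(norm (\<phi> (z + 0 *\<^sub>R u) - x))\<^sup>2 \<le> (norm (\<phi> (z + \<tau> *\<^sub>R u) - x))\<^sup>2"
      using xm by (auto simp: is_minimizer_def)
  qed
  then show ?thesis by simp
qed

lemma q_expand: "q z y w = (norm (w + (\<Sum>i\<in>Basis. (w \<bullet> i) *\<^sub>R D [i] z)))\<^sup>2
   + (\<mu> + z + D [] z - y) \<bullet> (\<Sum>i\<in>Basis. (w \<bullet> i) *\<^sub>R (\<Sum>j\<in>Basis. (w \<bullet> j) *\<^sub>R D [j, i] z))"
  unfolding q_def by (simp only: D1_expand[where w=w] D2_expand phi_eq)

lemma q_cont: "continuous_on S (\<lambda>p. q (fst (fst p)) (snd (fst p)) (snd p))"
  unfolding q_expand by (intro continuous_at_imp_continuous_on ballI continuous_intros)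

lemma q_zero: "q z y 0 = 0" using q_scale[of z y 0 0] by simp

lemma ulem:
  assumes pos: "\<forall>w\<in>T. w \<noteq> 0 \<longrightarrow> q 0 y0 w > 0"
  shows "\<exists>\<delta>>0. \<forall>z y w. norm z < \<delta> \<longrightarrow> dist y y0 < \<delta> \<longrightarrow> w \<in> T \<longrightarrow> q z y w \<ge> 0"
proof -
  define K where "K = T \<inter> sphere 0 1"
  have cK: "compact K" unfolding K_def
    by (rule closed_Int_compact) (auto simp: closed_subspace subT)
  have "\<exists>\<delta>>0. \<forall>p k. dist p (0, y0) < \<delta> \<longrightarrow> k \<in> K \<longrightarrow> (\<lambda>x. q (fst (fst x)) (snd (fst x)) (snd x)) (p, k) > 0"
    by (rule tube[OF cK q_cont]) (use pos in \<open>auto simp: K_def\<close>)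
  then obtain \<delta> where \<delta>: "\<delta> > 0" "\<And>p k. dist p (0, y0) < \<delta> \<Longrightarrow> k \<in> K \<Longrightarrow> q (fst p) (snd p) k > 0"
    by auto
  show ?thesis
  proof (intro exI[of _ "\<delta>/2"] conjI allI impI)
    fix z y w :: 'a assume z: "norm z < \<delta>/2" and y: "dist y y0 < \<delta>/2" and w: "w \<in> T"
    show "q z y w \<ge> 0"
    proof (cases "w = 0")
      case True then show ?thesis by (simp add: q_zero)
    next
      case False
      have "dist (z, y) (0, y0) \<le> dist z 0 + dist y y0"
        unfolding dist_Pair_Pair by (rule sqrt_sum_squares_le_sum) auto
      also have "\<dots> < \<delta>" using z y by simp
      finally have d: "dist (z, y) (0, y0) < \<delta>" .
      have k: "(1 / norm w) *\<^sub>R w \<in> K" using False w subT by (auto simp: K_def subspace_scale)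
      have "q z y ((1 / norm w) *\<^sub>R w) > 0" using \<delta>(2)[OF d k] by simp
      then have "(norm w)\<^sup>2 * q z y ((1 / norm w) *\<^sub>R w) \<ge> 0" by simp
      also have "(norm w)\<^sup>2 * q z y ((1 / norm w) *\<^sub>R w) = q z y w"
        using q_scale[of z y "1 / norm w" w] False by (simp add: power2_eq_square)
      finally show ?thesis .
    qed
  qed (use \<delta> in auto)
qed

lemma psi_cont: "continuous_on S (\<lambda>\<tau>::real. (norm (\<phi> (z + \<tau> *\<^sub>R w) - y))\<^sup>2)"
  by (rule continuous_at_imp_continuous_on) (blast intro: DERIV_isCont psi_d)

lemma psi1_cont: "continuous_on S (\<lambda>\<tau>::real. (\<phi> (z + \<tau> *\<^sub>R w) - y) \<bullet> (w + D [w] (z + \<tau> *\<^sub>R w)))"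
  by (rule continuous_at_imp_continuous_on) (blast intro: DERIV_isCont psi1_d)

lemma near_ge:
  assumes nn: "\<forall>s\<in>{0..1}. q (z + s *\<^sub>R w) y w \<ge> 0" and c0: "(\<phi> z - y) \<bullet> (w + D [w] z) = 0"
  shows "(norm (\<phi> z - y))\<^sup>2 \<le> (norm (\<phi> (z + w) - y))\<^sup>2"
proof -
  have p1: "(\<phi> (z + s *\<^sub>R w) - y) \<bullet> (w + D [w] (z + s *\<^sub>R w)) \<ge> 0" if s: "0 \<le> s" "s \<le> 1" for s
  proof -
    have "(\<lambda>\<tau>. (\<phi> (z + \<tau> *\<^sub>R w) - y) \<bullet> (w + D [w] (z + \<tau> *\<^sub>R w))) 0
        \<le> (\<lambda>\<tau>. (\<phi> (z + \<tau> *\<^sub>R w) - y) \<bullet> (w + D [w] (z + \<tau> *\<^sub>R w))) s"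
      by (rule DERIV_nonneg_imp_increasing_open[OF s(1)])
         (use nn s psi1_d psi1_cont in \<open>force+\<close>)
    then show ?thesis using c0 by simp
  qed
  have "(\<lambda>\<tau>. (norm (\<phi> (z + \<tau> *\<^sub>R w) - y))\<^sup>2) 0 \<le> (\<lambda>\<tau>. (norm (\<phi> (z + \<tau> *\<^sub>R w) - y))\<^sup>2) 1"
  proof (rule DERIV_nonneg_imp_increasing_open[of 0 1])
    fix x :: real assume "0 < x" "x < 1"
    then show "\<exists>y'. ((\<lambda>\<tau>. (norm (\<phi> (z + \<tau> *\<^sub>R w) - y))\<^sup>2) has_real_derivative y') (at x) \<and> 0 \<le> y'"
      using psi_d p1[of x] by force
  qed (auto intro: psi_cont)
  then show ?thesis by simp
qed

lemma psd_nec: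
  assumes ym: "is_minimizer M y \<mu>" and w: "w \<in> T"
  shows "q 0 y w \<ge> 0"
proof (rule ccontr)
  assume "\<not> q 0 y w \<ge> 0"
  then have neg: "q 0 y w < 0" by simp
  have "isCont (\<lambda>\<tau>::real. q (0 + \<tau> *\<^sub>R w) y w) 0" unfolding q_expand by (intro continuous_intros)
  then have "((\<lambda>\<tau>::real. q (0 + \<tau> *\<^sub>R w) y w) \<longlongrightarrow> q 0 y w) (at 0)" unfolding isCont_def by simp
  then have "\<forall>\<^sub>F \<tau> in at 0. q (0 + \<tau> *\<^sub>R w) y w < 0" using neg by (rule order_tendstoD)
  then have ev1: "\<forall>\<^sub>F \<tau> in nhds 0. q (0 + \<tau> *\<^sub>R w) y w < 0" using neg by (simp add: eventually_nhds_conv_at)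
  have ev2: "\<forall>\<^sub>F \<tau> in nhds (0::real). \<phi> (0 + \<tau> *\<^sub>R w) \<in> U" using ev_U[of 0 w] \<phi>0 \<mu>U by simp
  obtain e where e: "e > 0" "\<And>\<tau>. dist \<tau> 0 < e \<Longrightarrow> q (0 + \<tau> *\<^sub>R w) y w < 0 \<and> \<phi> (0 + \<tau> *\<^sub>R w) \<in> U"
    using eventually_conj[OF ev1 ev2] unfolding eventually_nhds_metric by blast
  define \<tau>0 where "\<tau>0 = e / 2"
  have t0: "0 < \<tau>0" "\<tau>0 < e" using e by (auto simp: \<tau>0_def)
  have c0: "(\<phi> 0 - y) \<bullet> (w + D [w] 0) = 0"
    using crit[of 0 y w] \<phi>0 \<mu>U ym w subT by (simp add: subspace_0)
  have p1: "(\<phi> (0 + s *\<^sub>R w) - y) \<bullet> (w + D [w] (0 + s *\<^sub>R w)) < 0" if s: "0 < s" "s < e" for s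
  proof -
    have "(\<lambda>\<tau>. (\<phi> (0 + \<tau> *\<^sub>R w) - y) \<bullet> (w + D [w] (0 + \<tau> *\<^sub>R w))) 0
        > (\<lambda>\<tau>. (\<phi> (0 + \<tau> *\<^sub>R w) - y) \<bullet> (w + D [w] (0 + \<tau> *\<^sub>R w))) s"
    proof (rule DERIV_neg_imp_decreasing[OF s(1)])
      fix x :: real assume "0 \<le> x" "x \<le> s"
      then have "q (0 + x *\<^sub>R w) y w < 0" using e s by (auto simp: dist_real_def)
      then show "\<exists>y'. ((\<lambda>\<tau>. (\<phi> (0 + \<tau> *\<^sub>R w) - y) \<bullet> (w + D [w] (0 + \<tau> *\<^sub>R w))) has_real_derivative y') (at x) \<and> y' < 0"
        using psi1_d by blast
    qed
    then show ?thesis using c0 by simp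
  qed
  have "(\<lambda>\<tau>. (norm (\<phi> (0 + \<tau> *\<^sub>R w) - y))\<^sup>2) 0 > (\<lambda>\<tau>. (norm (\<phi> (0 + \<tau> *\<^sub>R w) - y))\<^sup>2) \<tau>0"
  proof (rule DERIV_neg_imp_decreasing_open[OF t0(1)])
    fix x :: real assume "0 < x" "x < \<tau>0"
    then show "\<exists>y'. ((\<lambda>\<tau>. (norm (\<phi> (0 + \<tau> *\<^sub>R w) - y))\<^sup>2) has_real_derivative y') (at x) \<and> y' < 0"
    proof (intro exI conjI)
      show "((\<lambda>\<tau>. (norm (\<phi> (0 + \<tau> *\<^sub>R w) - y))\<^sup>2) has_real_derivative
        2 * ((\<phi> (0 + x *\<^sub>R w) - y) \<bullet> (w + D [w] (0 + x *\<^sub>R w)))) (at x)" by (rule psi_d)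
      show "2 * ((\<phi> (0 + x *\<^sub>R w) - y) \<bullet> (w + D [w] (0 + x *\<^sub>R w))) < 0"
        using p1[of x] t0 \<open>0 < x\<close> \<open>x < \<tau>0\<close> by simp
    qed
  next
    show "continuous_on {0..\<tau>0} (\<lambda>\<tau>. (norm (\<phi> (0 + \<tau> *\<^sub>R w) - y))\<^sup>2)" by (rule psi_cont)
  qed
  moreover have "\<phi> (0 + \<tau>0 *\<^sub>R w) \<in> M"
  proof (rule phi_in_M)
    show "0 + \<tau>0 *\<^sub>R w \<in> T" using w subT by (simp add: subspace_scale)
    show "\<phi> (0 + \<tau>0 *\<^sub>R w) \<in> U" using e t0 by (auto simp: dist_real_def)
  qed
  ultimately show False using ym \<phi>0 unfolding is_minimizer_def
    by (metis add_0 not_le scale_zero_left)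
qed

end


lemma abs_aux: fixes X A B Y :: real shows "\<bar>X - A\<bar> < \<bar>A - B\<bar>/2 \<Longrightarrow> \<bar>Y - B\<bar> < \<bar>A - B\<bar>/2 \<Longrightarrow> X = Y \<Longrightarrow> False"
  by (simp add: abs_if split: if_split_asm)

lemma mvt0:
  fixes f f' :: "real \<Rightarrow> real"
  assumes d: "\<And>x. (f has_real_derivative f' x) (at x)" and h: "h > 0"
  shows "\<exists>\<xi>. 0 < \<xi> \<and> \<xi> < h \<and> f h - f 0 = h * f' \<xi>"
proof -
  have "\<exists>l z. 0 < z \<and> z < h \<and> DERIV f z :> l \<and> f h - f 0 = (h - 0) * l"
  proof (rule MVT[OF h])
    show "continuous_on {0..h} f" by (rule continuous_at_imp_continuous_on) (blast intro: DERIV_isCont d)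
    show "\<And>x. 0 < x \<Longrightarrow> x < h \<Longrightarrow> f differentiable (at x)" using d by (auto simp: real_differentiable_def)
  qed
  then obtain l z where "0 < z" "z < h" "DERIV f z :> l" "f h - f 0 = h * l" by auto
  moreover have "l = f' z" using DERIV_unique[OF \<open>DERIV f z :> l\<close> d] .
  ultimately show ?thesis by blast
qed

context cset
begin

lemma Dline_d: "((\<lambda>s::real. D vs (p + s *\<^sub>R a) \<bullet> e) has_real_derivative (D (a # vs) (p + s *\<^sub>R a) \<bullet> e)) (at s)"
proof -
  have l: "linear (\<lambda>h. D (h # vs) (p + s *\<^sub>R a))" by (rule linD)
  have "((\<lambda>s::real. D vs (p + s *\<^sub>R a)) has_derivative (\<lambda>s'. D (s' *\<^sub>R a # vs) (p + s *\<^sub>R a))) (at s)"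
    by (rule has_derivative_compose[where g="D vs" and f="\<lambda>s. p + s *\<^sub>R a", OF _ Dd]) (auto intro!: derivative_eq_intros)
  then have "((\<lambda>s::real. D vs (p + s *\<^sub>R a) \<bullet> e) has_derivative (\<lambda>s'. D (s' *\<^sub>R a # vs) (p + s *\<^sub>R a) \<bullet> e)) (at s)"
    by (auto intro!: derivative_eq_intros)
  then show ?thesis
    by (rule has_derivative_imp_has_field_derivative) (simp add: linear_cmul[OF l])
qed

lemma Delta_rep:
  assumes h: "h > 0"
  shows "\<exists>\<xi> \<eta>. 0 < \<xi> \<and> \<xi> < h \<and> 0 < \<eta> \<and> \<eta> < h \<and>
    D [] (z + h *\<^sub>R a + h *\<^sub>R b) \<bullet> e - D [] (z + h *\<^sub>R a) \<bullet> e - D [] (z + h *\<^sub>R b) \<bullet> e + D [] z \<bullet> e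
     = h * (h * (D [b, a] (z + \<xi> *\<^sub>R a + \<eta> *\<^sub>R b) \<bullet> e))"
proof -
  define f1 where "f1 = (\<lambda>s::real. D [] ((z + h *\<^sub>R b) + s *\<^sub>R a) \<bullet> e - D [] (z + s *\<^sub>R a) \<bullet> e)"
  have d1: "(f1 has_real_derivative (D [a] ((z + h *\<^sub>R b) + s *\<^sub>R a) \<bullet> e - D [a] (z + s *\<^sub>R a) \<bullet> e)) (at s)" for s
    unfolding f1_def by (intro DERIV_diff Dline_d)
  obtain \<xi> where \<xi>: "0 < \<xi>" "\<xi> < h"
    "f1 h - f1 0 = h * (D [a] ((z + h *\<^sub>R b) + \<xi> *\<^sub>R a) \<bullet> e - D [a] (z + \<xi> *\<^sub>R a) \<bullet> e)"
    using mvt0[OF d1 h] by blast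
  define f2 where "f2 = (\<lambda>\<tau>::real. D [a] ((z + \<xi> *\<^sub>R a) + \<tau> *\<^sub>R b) \<bullet> e)"
  have d2: "(f2 has_real_derivative (D [b, a] ((z + \<xi> *\<^sub>R a) + \<tau> *\<^sub>R b) \<bullet> e)) (at \<tau>)" for \<tau>
    unfolding f2_def using Dline_d[where vs="[a]"] by simp
  obtain \<eta> where \<eta>: "0 < \<eta>" "\<eta> < h" "f2 h - f2 0 = h * (D [b, a] ((z + \<xi> *\<^sub>R a) + \<eta> *\<^sub>R b) \<bullet> e)"
    using mvt0[OF d2 h] by blast
  have "f2 h - f2 0 = D [a] ((z + h *\<^sub>R b) + \<xi> *\<^sub>R a) \<bullet> e - D [a] (z + \<xi> *\<^sub>R a) \<bullet> e"
    unfolding f2_def by (simp add: algebra_simps)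
  moreover have "f1 h - f1 0 = D [] (z + h *\<^sub>R a + h *\<^sub>R b) \<bullet> e - D [] (z + h *\<^sub>R a) \<bullet> e - D [] (z + h *\<^sub>R b) \<bullet> e + D [] z \<bullet> e"
    unfolding f1_def by (simp add: algebra_simps)
  ultimately have "D [] (z + h *\<^sub>R a + h *\<^sub>R b) \<bullet> e - D [] (z + h *\<^sub>R a) \<bullet> e - D [] (z + h *\<^sub>R b) \<bullet> e + D [] z \<bullet> e
     = h * (h * (D [b, a] ((z + \<xi> *\<^sub>R a) + \<eta> *\<^sub>R b) \<bullet> e))"
    using \<xi>(3) \<eta>(3) by simp
  then show ?thesis using \<xi>(1,2) \<eta>(1,2) by blast
qed

lemma D2_sym: "D [a, b] z = D [b, a] z"
proof -
  have comp: "D [b, a] z \<bullet> e = D [a, b] z \<bullet> e" for e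
  proof (rule ccontr)
    assume ne: "D [b, a] z \<bullet> e \<noteq> D [a, b] z \<bullet> e"
    define c where "c = \<bar>D [b, a] z \<bullet> e - D [a, b] z \<bullet> e\<bar>"
    have c: "c > 0" using ne by (simp add: c_def)
    have ct: "isCont (\<lambda>p. D vs p \<bullet> e) z" for vs by (intro continuous_intros)
    have "\<exists>d>0. \<forall>p. norm (p - z) < d \<longrightarrow> \<bar>D vs p \<bullet> e - D vs z \<bullet> e\<bar> < c/2" for vs
    proof -
      have "((\<lambda>p. D vs p \<bullet> e) \<longlongrightarrow> D vs z \<bullet> e) (at z)" using ct[of vs] by (simp add: isCont_def)
      then obtain d where d: "d > 0" "\<And>p. p \<noteq> z \<Longrightarrow> norm (p - z) < d \<Longrightarrow> norm (D vs p \<bullet> e - D vs z \<bullet> e) < c/2"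
        using c unfolding LIM_eq by (meson half_gt_zero)
      show ?thesis
      proof (intro exI[of _ d] conjI allI impI)
        fix p assume p: "norm (p - z) < d"
        show "\<bar>D vs p \<bullet> e - D vs z \<bullet> e\<bar> < c/2"
        proof (cases "p = z")
          case True then show ?thesis using c by simp
        next
          case False then show ?thesis using d p by auto
        qed
      qed (use d in auto)
    qed
    then obtain d1 d2 where d1: "d1 > 0" "\<And>p. norm (p - z) < d1 \<Longrightarrow> \<bar>D [b, a] p \<bullet> e - D [b, a] z \<bullet> e\<bar> < c/2"
      and d2: "d2 > 0" "\<And>p. norm (p - z) < d2 \<Longrightarrow> \<bar>D [a, b] p \<bullet> e - D [a, b] z \<bullet> e\<bar> < c/2"
      by meson
    define h where "h = min d1 d2 / (norm a + norm b + 1)"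
    have h: "h > 0" unfolding h_def using d1(1) d2(1)
      by (intro divide_pos_pos) (auto simp: add_nonneg_pos)
    have hb: "h * (norm a + norm b) < min d1 d2"
    proof -
      have "h * (norm a + norm b) < h * (norm a + norm b + 1)" using h by simp
      also have "\<dots> = min d1 d2" unfolding h_def
      proof -
        have "norm a + norm b + 1 > 0" by (simp add: add_nonneg_pos)
        then show "min d1 d2 / (norm a + norm b + 1) * (norm a + norm b + 1) = min d1 d2" by simp
      qed
      finally show ?thesis .
    qed
    have close: "norm ((z + x *\<^sub>R u + y *\<^sub>R v) - z) < min d1 d2"
      if "0 < x" "x < h" "0 < y" "y < h" "norm u + norm v = norm a + norm b" for x y u v
    proof -
      have "norm ((z + x *\<^sub>R u + y *\<^sub>R v) - z) \<le> x * norm u + y * norm v"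
        using that norm_triangle_ineq[of "x *\<^sub>R u" "y *\<^sub>R v"] by simp
      also have "\<dots> \<le> h * norm u + h * norm v" using that by (intro add_mono mult_right_mono) auto
      also have "\<dots> = h * (norm a + norm b)" using that(5) by (simp add: distrib_left[symmetric])
      finally show ?thesis using hb by simp
    qed
    obtain \<xi> \<eta> where r1: "0 < \<xi>" "\<xi> < h" "0 < \<eta>" "\<eta> < h"
      "D [] (z + h *\<^sub>R a + h *\<^sub>R b) \<bullet> e - D [] (z + h *\<^sub>R a) \<bullet> e - D [] (z + h *\<^sub>R b) \<bullet> e + D [] z \<bullet> e
       = h * (h * (D [b, a] (z + \<xi> *\<^sub>R a + \<eta> *\<^sub>R b) \<bullet> e))"
      using Delta_rep[OF h, of z a b e] by blast
    obtain \<xi>' \<eta>' where r2: "0 < \<xi>'" "\<xi>' < h" "0 < \<eta>'" "\<eta>' < h"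
      "D [] (z + h *\<^sub>R b + h *\<^sub>R a) \<bullet> e - D [] (z + h *\<^sub>R b) \<bullet> e - D [] (z + h *\<^sub>R a) \<bullet> e + D [] z \<bullet> e
       = h * (h * (D [a, b] (z + \<xi>' *\<^sub>R b + \<eta>' *\<^sub>R a) \<bullet> e))"
      using Delta_rep[OF h, of z b a e] by blast
    have "h * (h * (D [b, a] (z + \<xi> *\<^sub>R a + \<eta> *\<^sub>R b) \<bullet> e)) = h * (h * (D [a, b] (z + \<xi>' *\<^sub>R b + \<eta>' *\<^sub>R a) \<bullet> e))"
      using r1(5) r2(5) by (simp add: algebra_simps)
    then have eq: "D [b, a] (z + \<xi> *\<^sub>R a + \<eta> *\<^sub>R b) \<bullet> e = D [a, b] (z + \<xi>' *\<^sub>R b + \<eta>' *\<^sub>R a) \<bullet> e"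
      using h by simp
    have "\<bar>D [b, a] (z + \<xi> *\<^sub>R a + \<eta> *\<^sub>R b) \<bullet> e - D [b, a] z \<bullet> e\<bar> < c/2"
      using d1(2) close[of \<xi> \<eta> a b] r1 by simp
    moreover have "\<bar>D [a, b] (z + \<xi>' *\<^sub>R b + \<eta>' *\<^sub>R a) \<bullet> e - D [a, b] z \<bullet> e\<bar> < c/2"
      using d2(2) close[of \<xi>' \<eta>' b a] r2 by (simp add: add.commute)
    ultimately show False using eq abs_aux unfolding c_def by blast
  qed
  have "(D [a, b] z - D [b, a] z) \<bullet> (D [a, b] z - D [b, a] z) = 0"
    by (simp add: inner_diff_left comp)
  then show ?thesis by simp
qed

definition \<beta> where "\<beta> y v w = (J v) \<bullet> (J w) + (\<mu> - y) \<bullet> D [v, w] 0"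

lemma q0_beta: "q 0 y w = \<beta> y w w"
  unfolding q_def \<beta>_def J_def \<phi>0 power2_norm_eq_inner by simp

lemma beta_sym: "\<beta> y v w = \<beta> y w v"
  unfolding \<beta>_def by (simp add: D2_sym[of v w] inner_commute)

lemma J_add: "J (a + b) = J a + J b"
  unfolding J_def using linear_add[OF linD[where vs="[]" and x=0]] by simp
lemma J_scale: "J (s *\<^sub>R a) = s *\<^sub>R J a"
  unfolding J_def using linear_cmul[OF linD[where vs="[]" and x=0]] by (simp add: scaleR_add_right)

lemma beta_add1: "\<beta> y (a + b) w = \<beta> y a w + \<beta> y b w"
  unfolding \<beta>_def J_add using linear_add[OF linD[where vs="[w]" and x=0]]
  by (simp add: inner_add_left inner_add_right)
lemma beta_scale1: "\<beta> y (s *\<^sub>R a) w = s * \<beta> y a w"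
  unfolding \<beta>_def J_scale using linear_cmul[OF linD[where vs="[w]" and x=0]]
  by (simp add: algebra_simps)
lemma beta_add2: "\<beta> y w (a + b) = \<beta> y w a + \<beta> y w b"
  using beta_add1 beta_sym by metis
lemma beta_scale2: "\<beta> y w (s *\<^sub>R a) = s * \<beta> y w a"
  using beta_scale1 beta_sym by metis

lemma q_comb: "q 0 y (v + s *\<^sub>R w) = q 0 y v + 2 * s * \<beta> y v w + s\<^sup>2 * q 0 y w"
  unfolding q0_beta beta_add1 beta_add2 beta_scale1 beta_scale2
  by (simp add: beta_sym[of y w v] power2_eq_square algebra_simps)

lemma sd_chart: "second_deriv_at (\<lambda>v. (norm (\<mu> + v + g v - y))\<^sup>2) 0 (\<lambda>v w. 2 * \<beta> y v w)"
  unfolding second_deriv_at_def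
proof (intro exI conjI allI)
  let ?f' = "\<lambda>z w. 2 * ((\<phi> z - y) \<bullet> (w + D [w] z))"
  show "\<forall>\<^sub>F z in nhds 0. ((\<lambda>v. (norm (\<mu> + v + g v - y))\<^sup>2) has_derivative ?f' z) (at z)"
  proof (rule always_eventually, rule allI)
    fix z :: 'a
    have e: "(\<lambda>v. (norm (\<mu> + v + g v - y))\<^sup>2) = (\<lambda>v. (\<phi> v - y) \<bullet> (\<phi> v - y))"
      by (auto simp: \<phi>_def power2_norm_eq_inner)
    have "((\<lambda>v. (\<phi> v - y) \<bullet> (\<phi> v - y)) has_derivative
          (\<lambda>h. (\<phi> z - y) \<bullet> (h + D [h] z) + (h + D [h] z) \<bullet> (\<phi> z - y))) (at z)"
      by (rule has_derivative_inner) (rule has_derivative_eq_rhs[OF has_derivative_diff[OF phi_d has_derivative_const]], simp)+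
    then show "((\<lambda>v. (norm (\<mu> + v + g v - y))\<^sup>2) has_derivative ?f' z) (at z)"
      unfolding e by (rule has_derivative_eq_rhs) (auto simp: inner_commute)
  qed
  fix w :: 'a
  have "((\<lambda>z. (\<phi> z - y) \<bullet> (w + D [w] z)) has_derivative
        (\<lambda>v. (\<phi> 0 - y) \<bullet> D [v, w] 0 + (v + D [v] 0) \<bullet> (w + D [w] 0))) (at 0)"
  proof (rule has_derivative_inner)
    show "((\<lambda>z. \<phi> z - y) has_derivative (\<lambda>h. h + D [h] 0)) (at 0)"
      by (rule has_derivative_eq_rhs[OF has_derivative_diff[OF phi_d has_derivative_const]]) simp
    show "((\<lambda>z. w + D [w] z) has_derivative (\<lambda>v. D [v, w] 0)) (at 0)"
      by (rule has_derivative_eq_rhs[OF has_derivative_add[OF has_derivative_const D1_d]]) simp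
  qed
  then show "((\<lambda>z. ?f' z w) has_derivative (\<lambda>v. 2 * \<beta> y v w)) (at 0)"
    unfolding \<beta>_def J_def \<phi>0
    by (intro has_derivative_eq_rhs[OF has_derivative_mult_right]) (auto simp: algebra_simps)
qed

lemma posdef:
  assumes ym: "is_minimizer M y \<mu>" and nd: "\<not> degenerate_hessian M y \<mu>"
  shows "\<forall>w\<in>T. w \<noteq> 0 \<longrightarrow> q 0 y w > 0"
proof (intro ballI impI)
  fix v assume v: "v \<in> T" "v \<noteq> 0"
  have ge: "q 0 y v \<ge> 0" using psd_nec[OF ym v(1)] .
  show "q 0 y v > 0"
  proof (rule ccontr)
    assume "\<not> q 0 y v > 0"
    then have z: "q 0 y v = 0" using ge by simp
    have "\<forall>w\<in>T. 2 * \<beta> y v w = 0"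
    proof
      fix w assume w: "w \<in> T"
      define a where "a = \<beta> y v w"
      define b where "b = q 0 y w"
      have b: "b \<ge> 0" using psd_nec[OF ym w] by (simp add: b_def)
      define s where "s = - a / (b + 1)"
      have "v + s *\<^sub>R w \<in> T" using v w subT by (simp add: subspace_add subspace_scale)
      then have "q 0 y (v + s *\<^sub>R w) \<ge> 0" by (rule psd_nec[OF ym])
      then have nn: "2 * s * a + s\<^sup>2 * b \<ge> 0" using q_comb[of y v s w] z by (simp add: a_def b_def)
      have "(b + 1)\<^sup>2 * (2 * s * a + s\<^sup>2 * b) = - a\<^sup>2 * (b + 2)"
      proof -
        have bp: "b + 1 \<noteq> 0" using b by simp
        have e1: "(b + 1)\<^sup>2 * (2 * s * a) = - 2 * a\<^sup>2 * (b + 1)"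
          unfolding s_def using bp by (simp add: power2_eq_square field_simps)
        have "s\<^sup>2 = a\<^sup>2 / (b + 1)\<^sup>2" by (simp add: s_def power_divide)
        then have e2: "(b + 1)\<^sup>2 * (s\<^sup>2 * b) = a\<^sup>2 * b" using bp by simp
        have "(b + 1)\<^sup>2 * (2 * s * a + s\<^sup>2 * b) = (b + 1)\<^sup>2 * (2 * s * a) + (b + 1)\<^sup>2 * (s\<^sup>2 * b)"
          by (simp only: distrib_left)
        also have "\<dots> = - 2 * a\<^sup>2 * (b + 1) + a\<^sup>2 * b" by (simp only: e1 e2)
        also have "\<dots> = - a\<^sup>2 * (b + 2)" by (simp add: algebra_simps)
        finally show ?thesis .
      qed
      moreover have "(b + 1)\<^sup>2 * (2 * s * a + s\<^sup>2 * b) \<ge> 0" using nn by simp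
      ultimately have "a\<^sup>2 * (b + 2) \<le> 0" by linarith
      then have "a\<^sup>2 \<le> 0" using b by (simp add: mult_le_0_iff)
      then show "2 * \<beta> y v w = 0" by (simp add: a_def)
    qed
    then have "degenerate_hessian M y \<mu>"
      unfolding degenerate_hessian_def using ch sd_chart[of y] v by blast
    then show False using nd by simp
  qed
qed

end


context cset
begin

definition yl :: "real \<Rightarrow> 'a" where "yl l = \<mu> + l *\<^sub>R (t - \<mu>)"
definition Lam where "Lam = {l. 1 \<le> l \<and> is_minimizer M (yl l) \<mu>}"

lemma yl1: "yl 1 = t" by (simp add: yl_def)

lemma E_formula: "(norm (m - yl l))\<^sup>2 - (norm (\<mu> - yl l))\<^sup>2 = (norm (m - \<mu>))\<^sup>2 - 2 * l * ((m - \<mu>) \<bullet> (t - \<mu>))"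
proof -
  have "m - yl l = (m - \<mu>) - l *\<^sub>R (t - \<mu>)" "\<mu> - yl l = - (l *\<^sub>R (t - \<mu>))" by (auto simp: yl_def algebra_simps)
  then show ?thesis using nsq[of "m - \<mu>" "l *\<^sub>R (t - \<mu>)"] by (simp only:) (simp add: power_mult_distrib)
qed

lemma min_iff: "is_minimizer M (yl l) \<mu> \<longleftrightarrow> (\<forall>m\<in>M. 2 * l * ((m - \<mu>) \<bullet> (t - \<mu>)) \<le> (norm (m - \<mu>))\<^sup>2)"
proof -
  have "is_minimizer M (yl l) \<mu> \<longleftrightarrow> (\<forall>m\<in>M. (norm (m - yl l))\<^sup>2 - (norm (\<mu> - yl l))\<^sup>2 \<ge> 0)"
    using \<mu>M by (auto simp: is_minimizer_def)
  then show ?thesis unfolding E_formula by simp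
qed

lemma min_down:
  assumes "is_minimizer M (yl l) \<mu>" "0 \<le> l'" "l' \<le> l"
  shows "is_minimizer M (yl l') \<mu>"
  unfolding min_iff
proof
  fix m assume m: "m \<in> M"
  have a: "2 * l * ((m - \<mu>) \<bullet> (t - \<mu>)) \<le> (norm (m - \<mu>))\<^sup>2" using assms(1) m min_iff by blast
  show "2 * l' * ((m - \<mu>) \<bullet> (t - \<mu>)) \<le> (norm (m - \<mu>))\<^sup>2"
  proof (cases "(m - \<mu>) \<bullet> (t - \<mu>) \<le> 0")
    case True
    then have "2 * l' * ((m - \<mu>) \<bullet> (t - \<mu>)) \<le> 0" using assms(2) by (simp add: mult_nonneg_nonpos)
    then show ?thesis by (smt (verit) zero_le_power2)
  next
    case False
    then have "2 * l' * ((m - \<mu>) \<bullet> (t - \<mu>)) \<le> 2 * l * ((m - \<mu>) \<bullet> (t - \<mu>))" using assms(3) by simp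
    then show ?thesis using a by linarith
  qed
qed

lemma one_Lam: "1 \<in> Lam" using tmin by (simp add: Lam_def yl1)

lemma closed_Lam: "closed Lam"
proof -
  have "Lam = {l. 1 \<le> l} \<inter> (\<Inter>m\<in>M. {l. 2 * l * ((m - \<mu>) \<bullet> (t - \<mu>)) \<le> (norm (m - \<mu>))\<^sup>2})"
    unfolding Lam_def min_iff by auto
  also have "closed \<dots>"
    by (intro closed_Int closed_INT ballI closed_Collect_le continuous_intros continuous_on_const) 
  finally show ?thesis .
qed

lemma q_aff: "q 0 (yl l) w = (1 - l) * (norm (J w))\<^sup>2 + l * q 0 t w"
proof -
  show ?thesis unfolding q_def \<phi>0 J_def[symmetric] yl_def
    by (simp add: algebra_simps inner_diff_left inner_add_left)
qed

lemma cut_step: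
  assumes l1: "l1 \<in> Lam" and nc: "yl l1 \<notin> cutlocus M"
  shows "\<exists>l\<in>Lam. l > l1"
proof -
  have ym1: "is_minimizer M (yl l1) \<mu>" and l1ge: "1 \<le> l1" using l1 by (auto simp: Lam_def)
  have uniq: "\<And>m. is_minimizer M (yl l1) m \<Longrightarrow> m = \<mu>" using nc ym1 unfolding cutlocus_def by blast
  have nd: "\<not> degenerate_hessian M (yl l1) \<mu>" using nc ym1 unfolding cutlocus_def by blast
  obtain \<delta> where \<delta>: "\<delta> > 0" "\<And>z y w. norm z < \<delta> \<Longrightarrow> dist y (yl l1) < \<delta> \<Longrightarrow> w \<in> T \<Longrightarrow> q z y w \<ge> 0"
    using ulem[OF posdef[OF ym1 nd]] by blast
  obtain \<rho>U where \<rho>U: "\<rho>U > 0" "ball \<mu> \<rho>U \<subseteq> U" using openU \<mu>U open_contains_ball by blast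
  define \<rho> where "\<rho> = min \<delta> \<rho>U"
  have \<rho>: "\<rho> > 0" "\<rho> \<le> \<delta>" "ball \<mu> \<rho> \<subseteq> U" using \<delta> \<rho>U by (auto simp: \<rho>_def)
  define K where "K = M \<inter> - ball \<mu> \<rho>"
  have cK: "compact K" unfolding K_def by (rule compact_Int_closed[OF cM]) auto
  let ?F = "\<lambda>p::real \<times> 'a. (norm (snd p - yl (fst p)))\<^sup>2 - (norm (\<mu> - yl (fst p)))\<^sup>2"
  have "\<exists>\<delta>'>0. \<forall>l m. dist l l1 < \<delta>' \<longrightarrow> m \<in> K \<longrightarrow> ?F (l, m) > 0"
  proof (rule tube[OF cK])
    show "continuous_on (cball l1 1 \<times> K) ?F" unfolding yl_def by (intro continuous_intros)
    show "\<forall>k\<in>K. ?F (l1, k) > 0"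
    proof
      fix m assume m: "m \<in> K"
      then have mM: "m \<in> M" and mne: "m \<noteq> \<mu>" using \<rho> by (auto simp: K_def)
      have ge: "(norm (\<mu> - yl l1))\<^sup>2 \<le> (norm (m - yl l1))\<^sup>2" using ym1 mM by (simp add: is_minimizer_def)
      have "(norm (\<mu> - yl l1))\<^sup>2 \<noteq> (norm (m - yl l1))\<^sup>2"
      proof
        assume eq: "(norm (\<mu> - yl l1))\<^sup>2 = (norm (m - yl l1))\<^sup>2"
        have "is_minimizer M (yl l1) m" using ym1 mM eq by (auto simp: is_minimizer_def)
        then show False using uniq mne by blast
      qed
      then have "(norm (\<mu> - yl l1))\<^sup>2 < (norm (m - yl l1))\<^sup>2" using ge by linarith
      then show "?F (l1, m) > 0" by simp
    qed
  qed
  then obtain \<delta>' where \<delta>': "\<delta>' > 0" "\<And>l m. dist l l1 < \<delta>' \<Longrightarrow> m \<in> K \<Longrightarrow> ?F (l, m) > 0" by blast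
  define \<epsilon> where "\<epsilon> = min (\<delta>'/2) (\<delta> / (2 * (norm (t - \<mu>) + 1)))"
  have \<epsilon>: "\<epsilon> > 0" "\<epsilon> < \<delta>'" using \<delta> \<delta>' by (auto simp: \<epsilon>_def add_nonneg_pos)
  have "\<epsilon> * norm (t - \<mu>) < \<delta>"
  proof -
    have "\<epsilon> * norm (t - \<mu>) \<le> (\<delta> / (2 * (norm (t - \<mu>) + 1))) * norm (t - \<mu>)"
      by (intro mult_right_mono) (auto simp: \<epsilon>_def)
    also have "\<dots> = \<delta> * (norm (t - \<mu>) / (2 * (norm (t - \<mu>) + 1)))" by simp
    also have "\<dots> < \<delta> * 1"
    proof (rule mult_strict_left_mono)
      have p: "2 * (norm (t - \<mu>) + 1) > 0" by (simp add: add_nonneg_pos)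
      show "norm (t - \<mu>) / (2 * (norm (t - \<mu>) + 1)) < 1" using p by (simp add: divide_less_eq)
    qed (use \<delta> in auto)
    also have "\<dots> = \<delta>" by simp
    finally show ?thesis .
  qed
  moreover have "yl (l1 + \<epsilon>) - yl l1 = \<epsilon> *\<^sub>R (t - \<mu>)" by (simp add: yl_def algebra_simps)
  ultimately have dy: "dist (yl (l1 + \<epsilon>)) (yl l1) < \<delta>" using \<epsilon> by (simp add: dist_norm)
  have "is_minimizer M (yl (l1 + \<epsilon>)) \<mu>"
    unfolding is_minimizer_def
  proof (intro conjI ballI)
    show "\<mu> \<in> M" by (rule \<mu>M)
    fix m assume mM: "m \<in> M"
    show "(norm (\<mu> - yl (l1 + \<epsilon>)))\<^sup>2 \<le> (norm (m - yl (l1 + \<epsilon>)))\<^sup>2"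
    proof (cases "m \<in> K")
      case True
      have "?F (l1 + \<epsilon>, m) > 0" using \<delta>'(2)[OF _ True] \<epsilon> by (simp add: dist_real_def)
      then show ?thesis by (simp only: fst_conv snd_conv)
    next
      case False
      then have "m \<in> ball \<mu> \<rho>" using mM by (auto simp: K_def)
      then have mU: "m \<in> U" using \<rho> by auto
      then have "m \<in> {\<mu> + v + g v | v. v \<in> T}" using mM MU by blast
      then obtain v where v: "v \<in> T" "m = \<mu> + v + g v" by blast
      have "(norm (m - \<mu>))\<^sup>2 = (norm v)\<^sup>2 + (norm (g v))\<^sup>2"
        using orthT[OF v(1) v(1)] v(2) unfolding power2_norm_eq_inner
        by (simp add: inner_add_left inner_add_right inner_commute)
      then have "norm v \<le> norm (m - \<mu>)" by (metis abs_norm_cancel le_add_same_cancel1 real_le_rsqrt zero_le_power2 real_sqrt_abs)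
      also have "norm (m - \<mu>) < \<rho>" using \<open>m \<in> ball \<mu> \<rho>\<close> by (simp add: dist_norm norm_minus_commute)
      finally have nv: "norm v < \<delta>" using \<rho> by simp
      have nn: "\<forall>s\<in>{0..1}. q (0 + s *\<^sub>R v) (yl (l1 + \<epsilon>)) v \<ge> 0"
      proof
        fix s :: real assume s: "s \<in> {0..1}"
        have "norm (0 + s *\<^sub>R v) \<le> norm v" using s by (simp add: mult_left_le_one_le)
        then show "q (0 + s *\<^sub>R v) (yl (l1 + \<epsilon>)) v \<ge> 0" using \<delta>(2) nv dy v(1) by simp
      qed
      have c0t: "(\<phi> 0 - t) \<bullet> (v + D [v] 0) = 0" using crit[of 0 t v] \<phi>0 \<mu>U tmin v(1) subT by (simp add: subspace_0)
      have "\<phi> 0 - yl (l1 + \<epsilon>) = (l1 + \<epsilon>) *\<^sub>R (\<phi> 0 - t)" by (simp add: \<phi>0 yl_def algebra_simps)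
      then have c0: "(\<phi> 0 - yl (l1 + \<epsilon>)) \<bullet> (v + D [v] 0) = 0" using c0t by simp
      have "(norm (\<phi> 0 - yl (l1 + \<epsilon>)))\<^sup>2 \<le> (norm (\<phi> (0 + v) - yl (l1 + \<epsilon>)))\<^sup>2"
        using near_ge[OF nn] c0 by simp
      moreover have "\<phi> (0 + v) = m" using v(2) by (simp add: \<phi>_def)
      ultimately show ?thesis by (simp add: \<phi>0)
    qed
  qed
  then have "l1 + \<epsilon> \<in> Lam" using l1ge \<epsilon> by (simp add: Lam_def)
  then show ?thesis using \<epsilon> by (intro bexI[of _ "l1 + \<epsilon>"]) auto
qed

lemma Lam_bdd_case:
  assumes tnc: "t \<notin> cutlocus M" and bdd: "bdd_above Lam"
  shows "\<exists>l1. l1 \<in> Lam \<and> l1 > 1 \<and> yl l1 \<in> cutlocus M"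
proof -
  define l1 where "l1 = Sup Lam"
  have ne: "Lam \<noteq> {}" using one_Lam by blast
  have l1L: "l1 \<in> Lam" unfolding l1_def by (rule closed_contains_Sup[OF ne bdd closed_Lam])
  have inC: "yl l1 \<in> cutlocus M"
  proof (rule ccontr)
    assume "yl l1 \<notin> cutlocus M"
    then obtain l where "l \<in> Lam" "l > l1" using cut_step[OF l1L] by blast
    moreover have "l \<le> l1" unfolding l1_def using \<open>l \<in> Lam\<close> bdd by (rule cSup_upper)
    ultimately show False by simp
  qed
  have "l1 \<ge> 1" using l1L by (simp add: Lam_def)
  moreover have "l1 \<noteq> 1" using inC tnc yl1 by auto
  ultimately show ?thesis using l1L inC by auto
qed

lemma Lam_unbdd:
  assumes nb: "\<not> bdd_above Lam" and l: "l \<ge> 1"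
  shows "l \<in> Lam"
proof -
  obtain l' where l': "l' \<in> Lam" "l' > l" using nb unfolding bdd_above_def by (meson not_le)
  then have "is_minimizer M (yl l') \<mu>" by (simp add: Lam_def)
  then have "is_minimizer M (yl l) \<mu>" by (rule min_down) (use l l' in auto)
  then show ?thesis using l by (simp add: Lam_def)
qed

lemma kappa_from:
  assumes "l \<in> Lam" "w \<in> T"
  shows "q 0 t w \<ge> (1 - 1/l) * (norm (J w))\<^sup>2"
proof -
  have l1: "l \<ge> 1" and ym: "is_minimizer M (yl l) \<mu>" using assms by (auto simp: Lam_def)
  have "0 \<le> q 0 (yl l) w" by (rule psd_nec[OF ym assms(2)])
  also have "\<dots> = (1 - l) * (norm (J w))\<^sup>2 + l * q 0 t w" by (rule q_aff)
  finally have "l * q 0 t w \<ge> (l - 1) * (norm (J w))\<^sup>2" by (simp add: algebra_simps)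
  then have "q 0 t w \<ge> ((l - 1) * (norm (J w))\<^sup>2) / l" using l1 by (simp add: divide_le_eq mult.commute)
  moreover have "((l - 1) * (norm (J w))\<^sup>2) / l = (1 - 1/l) * (norm (J w))\<^sup>2" using l1 by (simp add: field_simps)
  ultimately show ?thesis by simp
qed

lemma kappa_unbdd:
  assumes nb: "\<not> bdd_above Lam" and w: "w \<in> T"
  shows "q 0 t w \<ge> (norm (J w))\<^sup>2"
proof (rule ccontr)
  assume "\<not> q 0 t w \<ge> (norm (J w))\<^sup>2"
  then have c: "(norm (J w))\<^sup>2 - q 0 t w > 0" by simp
  define l where "l = (norm (J w))\<^sup>2 / ((norm (J w))\<^sup>2 - q 0 t w) + 1"
  have l1: "l \<ge> 1" using c by (simp add: l_def)
  have "q 0 t w \<ge> (1 - 1/l) * (norm (J w))\<^sup>2" using kappa_from[OF Lam_unbdd[OF nb l1] w] .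
  then have "(norm (J w))\<^sup>2 - q 0 t w \<le> (norm (J w))\<^sup>2 / l" by (simp add: algebra_simps)
  also have "\<dots> < (norm (J w))\<^sup>2 - q 0 t w"
  proof -
    define a where "a = (norm (J w))\<^sup>2"
    define c' where "c' = (norm (J w))\<^sup>2 - q 0 t w"
    have a: "a \<ge> 0" and c': "c' > 0" using c by (auto simp: a_def c'_def)
    have "a / (a / c' + 1) < c'"
    proof -
      have p: "a / c' + 1 > 0" using a c' by (simp add: add_nonneg_pos)
      have "a < c' * (a / c' + 1)" using c' by (simp add: distrib_left)
      then show ?thesis using p by (simp add: divide_less_eq mult.commute)
    qed
    then show ?thesis by (simp add: l_def a_def c'_def)
  qed
  finally show False by simp
qed

lemma min_cont:
  assumes uniq: "\<And>m. is_minimizer M t m \<Longrightarrow> m = \<mu>" and e: "e > 0"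
  shows "\<exists>\<delta>>0. \<forall>x m. dist x t < \<delta> \<longrightarrow> is_minimizer M x m \<longrightarrow> dist m \<mu> < e"
proof -
  define K where "K = M \<inter> - ball \<mu> e"
  have cK: "compact K" unfolding K_def by (rule compact_Int_closed[OF cM]) auto
  let ?F = "\<lambda>p::'a \<times> 'a. norm (snd p - fst p) - norm (\<mu> - fst p)"
  have "\<exists>\<delta>>0. \<forall>x m. dist x t < \<delta> \<longrightarrow> m \<in> K \<longrightarrow> ?F (x, m) > 0"
  proof (rule tube[OF cK])
    show "continuous_on (cball t 1 \<times> K) ?F" by (intro continuous_intros)
    show "\<forall>k\<in>K. ?F (t, k) > 0"
    proof
      fix m assume m: "m \<in> K"
      then have mM: "m \<in> M" and mne: "m \<noteq> \<mu>" using e by (auto simp: K_def)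
      have ge: "(norm (\<mu> - t))\<^sup>2 \<le> (norm (m - t))\<^sup>2" using tmin mM by (simp add: is_minimizer_def)
      have "(norm (\<mu> - t))\<^sup>2 \<noteq> (norm (m - t))\<^sup>2"
      proof
        assume eq: "(norm (\<mu> - t))\<^sup>2 = (norm (m - t))\<^sup>2"
        have "is_minimizer M t m" using tmin mM eq by (auto simp: is_minimizer_def)
        then show False using uniq mne by blast
      qed
      then have "(norm (\<mu> - t))\<^sup>2 < (norm (m - t))\<^sup>2" using ge by linarith
      then have "norm (\<mu> - t) < norm (m - t)" by (simp add: power_less_imp_less_base)
      then show "?F (t, m) > 0" by simp
    qed
  qed
  then obtain \<delta> where \<delta>: "\<delta> > 0" "\<And>x m. dist x t < \<delta> \<Longrightarrow> m \<in> K \<Longrightarrow> ?F (x, m) > 0" by blast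
  show ?thesis
  proof (intro exI[of _ \<delta>] conjI allI impI)
    fix x m assume x: "dist x t < \<delta>" and xm: "is_minimizer M x m"
    show "dist m \<mu> < e"
    proof (rule ccontr)
      assume "\<not> dist m \<mu> < e"
      then have "m \<in> K" using xm by (auto simp: K_def is_minimizer_def dist_commute)
      then have "norm (m - x) > norm (\<mu> - x)" using \<delta>(2)[OF x] by simp
      moreover have "(norm (m - x))\<^sup>2 \<le> (norm (\<mu> - x))\<^sup>2" using xm \<mu>M by (simp add: is_minimizer_def)
      ultimately show False by (simp add: not_le[symmetric] power_mono)
    qed
  qed (use \<delta> in auto)
qed

lemma chart_pt:
  assumes "m \<in> M" "m \<in> U"
  shows "\<exists>v\<in>T. m = \<phi> v \<and> norm v \<le> norm (m - \<mu>)"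
proof -
  have "m \<in> {\<mu> + v + g v | v. v \<in> T}" using assms MU by blast
  then obtain v where v: "v \<in> T" "m = \<mu> + v + g v" by blast
  have "(norm (m - \<mu>))\<^sup>2 = (norm v)\<^sup>2 + (norm (g v))\<^sup>2"
    using orthT[OF v(1) v(1)] v(2) unfolding power2_norm_eq_inner
    by (simp add: inner_add_left inner_add_right inner_commute)
  then have "(norm v)\<^sup>2 \<le> (norm (m - \<mu>))\<^sup>2" by simp
  then have "norm v \<le> norm (m - \<mu>)" by (simp add: power2_le_iff_abs_le)
  then show ?thesis using v by (auto simp: \<phi>_def)
qed

lemma near_t_good:
  assumes uniq: "\<And>m. is_minimizer M t m \<Longrightarrow> m = \<mu>" and l2: "l2 \<in> Lam" "l2 > 1"
  shows "\<exists>\<delta>>0. \<forall>x m. dist x t < \<delta> \<longrightarrow> is_minimizer M x m \<longrightarrow> is_minimizer M (m + ((1 + l2)/2) *\<^sub>R (x - m)) m"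
proof -
  define lm where "lm = (1 + l2) / 2"
  have lm: "1 < lm" "lm < l2" using l2 by (auto simp: lm_def)
  have qpos: "\<forall>w\<in>T. w \<noteq> 0 \<longrightarrow> q 0 (yl lm) w > 0"
  proof (intro ballI impI)
    fix w assume w: "w \<in> T" "w \<noteq> 0"
    have k: "q 0 t w \<ge> (1 - 1/l2) * (norm (J w))\<^sup>2" by (rule kappa_from[OF l2(1) w(1)])
    have "q 0 (yl lm) w = (1 - lm) * (norm (J w))\<^sup>2 + lm * q 0 t w" by (rule q_aff)
    also have "\<dots> \<ge> (1 - lm) * (norm (J w))\<^sup>2 + lm * ((1 - 1/l2) * (norm (J w))\<^sup>2)"
      using k lm by (intro add_left_mono mult_left_mono) auto
    also have "(1 - lm) * (norm (J w))\<^sup>2 + lm * ((1 - 1/l2) * (norm (J w))\<^sup>2) = (1 - lm/l2) * (norm (J w))\<^sup>2"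
      by (simp add: algebra_simps)
    finally have ge: "q 0 (yl lm) w \<ge> (1 - lm/l2) * (norm (J w))\<^sup>2" .
    have "(norm w)\<^sup>2 > 0" using w by simp
    then have "(norm (J w))\<^sup>2 > 0" using J_ge[OF w(1)] by linarith
    moreover have "1 - lm/l2 > 0" using lm l2 by (simp add: divide_less_eq)
    ultimately show "q 0 (yl lm) w > 0" using ge by (smt (verit) mult_pos_pos)
  qed
  obtain \<delta>1 where \<delta>1: "\<delta>1 > 0" "\<And>z y w. norm z < \<delta>1 \<Longrightarrow> dist y (yl lm) < \<delta>1 \<Longrightarrow> w \<in> T \<Longrightarrow> q z y w \<ge> 0"
    using ulem[OF qpos] by blast
  obtain \<rho>U where \<rho>U: "\<rho>U > 0" "ball \<mu> \<rho>U \<subseteq> U" using openU \<mu>U open_contains_ball by blast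
  define \<rho> where "\<rho> = min \<delta>1 \<rho>U"
  have \<rho>: "\<rho> > 0" "\<rho> \<le> \<delta>1" "ball \<mu> \<rho> \<subseteq> U" using \<delta>1 \<rho>U by (auto simp: \<rho>_def)
  define K where "K = M \<inter> - ball \<mu> \<rho>"
  have cK: "compact K" unfolding K_def by (rule compact_Int_closed[OF cM]) auto
  let ?F = "\<lambda>p::('a \<times> 'a) \<times> 'a. (norm (snd p - (snd (fst p) + lm *\<^sub>R (fst (fst p) - snd (fst p)))))\<^sup>2
      - (norm (snd (fst p) - (snd (fst p) + lm *\<^sub>R (fst (fst p) - snd (fst p)))))\<^sup>2"
  have "\<exists>\<delta>>0. \<forall>p m'. dist p (t, \<mu>) < \<delta> \<longrightarrow> m' \<in> K \<longrightarrow> ?F (p, m') > 0"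
  proof (rule tube[OF cK])
    show "continuous_on (cball (t, \<mu>) 1 \<times> K) ?F" by (intro continuous_intros)
    show "\<forall>k\<in>K. ?F ((t, \<mu>), k) > 0"
    proof
      fix m' assume m': "m' \<in> K"
      then have mM: "m' \<in> M" and mne: "m' \<noteq> \<mu>" using \<rho> by (auto simp: K_def)
      have yl: "\<mu> + lm *\<^sub>R (t - \<mu>) = yl lm" by (simp add: yl_def)
      have val: "?F ((t, \<mu>), m') = (norm (m' - \<mu>))\<^sup>2 - 2 * lm * ((m' - \<mu>) \<bullet> (t - \<mu>))"
        using E_formula[of m' lm] yl by simp
      have a: "2 * l2 * ((m' - \<mu>) \<bullet> (t - \<mu>)) \<le> (norm (m' - \<mu>))\<^sup>2"
        using l2(1) mM unfolding Lam_def min_iff by blast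
      have p: "(norm (m' - \<mu>))\<^sup>2 > 0" using mne by simp
      show "?F ((t, \<mu>), m') > 0"
      proof (cases "(m' - \<mu>) \<bullet> (t - \<mu>) \<le> 0")
        case True
        then have "2 * lm * ((m' - \<mu>) \<bullet> (t - \<mu>)) \<le> 0" using lm by (simp add: mult_nonneg_nonpos)
        then show ?thesis using val p by linarith
      next
        case False
        then have "2 * lm * ((m' - \<mu>) \<bullet> (t - \<mu>)) < 2 * l2 * ((m' - \<mu>) \<bullet> (t - \<mu>))" using lm by simp
        then show ?thesis using val a by linarith
      qed
    qed
  qed
  then obtain \<delta>2 where \<delta>2: "\<delta>2 > 0" "\<And>p m'. dist p (t, \<mu>) < \<delta>2 \<Longrightarrow> m' \<in> K \<Longrightarrow> ?F (p, m') > 0" by blast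
  define \<sigma> where "\<sigma> = min \<rho> (min (\<delta>2/2) (\<delta>1 / (2 * lm + 1)))"
  have \<sigma>: "\<sigma> > 0" "\<sigma> \<le> \<rho>" "2 * \<sigma> \<le> \<delta>2" "(2 * lm + 1) * \<sigma> \<le> \<delta>1"
  proof -
    have p: "2 * lm + 1 > 0" using lm by simp
    show "\<sigma> > 0" using \<rho> \<delta>2 \<delta>1 p by (simp add: \<sigma>_def)
    show "\<sigma> \<le> \<rho>" by (simp add: \<sigma>_def)
    show "2 * \<sigma> \<le> \<delta>2" by (simp add: \<sigma>_def)
    have "\<sigma> \<le> \<delta>1 / (2 * lm + 1)" by (simp add: \<sigma>_def)
    then show "(2 * lm + 1) * \<sigma> \<le> \<delta>1" using p by (simp add: le_divide_eq mult.commute)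
  qed
  obtain \<delta>3 where \<delta>3: "\<delta>3 > 0" "\<And>x m. dist x t < \<delta>3 \<Longrightarrow> is_minimizer M x m \<Longrightarrow> dist m \<mu> < \<sigma>"
    using min_cont[OF uniq \<sigma>(1)] by blast
  show ?thesis
  proof (intro exI[of _ "min \<sigma> \<delta>3"] conjI allI impI)
    show "min \<sigma> \<delta>3 > 0" using \<sigma> \<delta>3 by simp
    fix x m assume x: "dist x t < min \<sigma> \<delta>3" and xm: "is_minimizer M x m"
    have mM: "m \<in> M" using xm by (simp add: is_minimizer_def)
    have dm: "dist m \<mu> < \<sigma>" using \<delta>3(2)[OF _ xm] x by simp
    have xt: "norm (x - t) < \<sigma>" using x by (simp add: dist_norm)
    have mU: "m \<in> U" using dm \<sigma> \<rho> by (auto simp: dist_commute)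
    obtain v where v: "v \<in> T" "m = \<phi> v" "norm v \<le> norm (m - \<mu>)" using chart_pt[OF mM mU] by blast
    have nv: "norm v < \<delta>1" using v(3) dm \<sigma> \<rho> by (simp add: dist_norm)
    define y' where "y' = m + lm *\<^sub>R (x - m)"
    have "y' - yl lm = (1 - lm) *\<^sub>R (m - \<mu>) + lm *\<^sub>R (x - t)" by (simp add: y'_def yl_def algebra_simps)
    then have "norm (y' - yl lm) \<le> (lm - 1) * norm (m - \<mu>) + lm * norm (x - t)"
      using norm_triangle_ineq[of "(1 - lm) *\<^sub>R (m - \<mu>)" "lm *\<^sub>R (x - t)"] lm by simp
    also have "\<dots> \<le> (lm - 1) * \<sigma> + lm * \<sigma>"
      using dm xt lm by (intro add_mono mult_left_mono) (auto simp: dist_norm)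
    also have "\<dots> < (2 * lm + 1) * \<sigma>" using \<sigma> by (simp add: algebra_simps)
    finally have dy: "dist y' (yl lm) < \<delta>1" using \<sigma> by (simp add: dist_norm)
    have dp: "dist (x, m) (t, \<mu>) < \<delta>2"
    proof -
      have "dist (x, m) (t, \<mu>) \<le> dist x t + dist m \<mu>"
        unfolding dist_Pair_Pair by (rule sqrt_sum_squares_le_sum) auto
      also have "\<dots> < 2 * \<sigma>" using x dm by simp
      finally show ?thesis using \<sigma> by simp
    qed
    show "is_minimizer M (m + ((1 + l2) / 2) *\<^sub>R (x - m)) m"
      unfolding lm_def[symmetric] y'_def[symmetric] is_minimizer_def
    proof (intro conjI ballI)
      show "m \<in> M" by (rule mM)
      fix m' assume m'M: "m' \<in> M"
      show "(norm (m - y'))\<^sup>2 \<le> (norm (m' - y'))\<^sup>2"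
      proof (cases "m' \<in> K")
        case True
        have "?F ((x, m), m') > 0" using \<delta>2(2)[OF dp True] .
        then have "(norm (m - y'))\<^sup>2 < (norm (m' - y'))\<^sup>2" by (simp only: fst_conv snd_conv y'_def)
        then show ?thesis by linarith
      next
        case False
        then have "m' \<in> ball \<mu> \<rho>" using m'M by (auto simp: K_def)
        then have m'U: "m' \<in> U" using \<rho> by auto
        obtain v' where v': "v' \<in> T" "m' = \<phi> v'" "norm v' \<le> norm (m' - \<mu>)" using chart_pt[OF m'M m'U] by blast
        have nv': "norm v' < \<delta>1" using v'(3) \<open>m' \<in> ball \<mu> \<rho>\<close> \<rho> by (simp add: dist_norm norm_minus_commute)
        have w: "v' - v \<in> T" using v v' subT by (simp add: subspace_diff)
        have nn: "\<forall>s\<in>{0..1}. q (v + s *\<^sub>R (v' - v)) y' (v' - v) \<ge> 0"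
        proof
          fix s :: real assume s: "s \<in> {0..1}"
          have "v + s *\<^sub>R (v' - v) = (1 - s) *\<^sub>R v + s *\<^sub>R v'" by (simp add: algebra_simps)
          then have "norm (v + s *\<^sub>R (v' - v)) \<le> (1 - s) * norm v + s * norm v'"
            using norm_triangle_ineq[of "(1 - s) *\<^sub>R v" "s *\<^sub>R v'"] s by simp
          also have "\<dots> < \<delta>1"
          proof -
            have "(1 - s) * norm v \<le> (1 - s) * \<delta>1" "s * norm v' \<le> s * \<delta>1"
              using s nv nv' by (auto intro!: mult_left_mono)
            moreover have "(1 - s) * norm v < (1 - s) * \<delta>1 \<or> s * norm v' < s * \<delta>1"
              using s nv nv' by (cases "s = 1") auto
            ultimately show ?thesis by (auto simp: algebra_simps)
          qed
          finally show "q (v + s *\<^sub>R (v' - v)) y' (v' - v) \<ge> 0" using \<delta>1(2) dy w by blast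
        qed
        have crx: "(\<phi> v - x) \<bullet> ((v' - v) + D [v' - v] v) = 0"
          using crit[OF v(1) _ _ w] v mU xm by simp
        have "\<phi> v - y' = lm *\<^sub>R (\<phi> v - x)" using v(2) by (simp add: y'_def algebra_simps)
        then have c0: "(\<phi> v - y') \<bullet> ((v' - v) + D [v' - v] v) = 0" using crx by simp
        have "(norm (\<phi> v - y'))\<^sup>2 \<le> (norm (\<phi> (v + (v' - v)) - y'))\<^sup>2" by (rule near_ge[OF nn c0])
        then show ?thesis using v(2) v'(2) by simp
      qed
    qed
  qed
qed

end


lemma ortho_expand:
  fixes B :: "'a::euclidean_space set"
  assumes fin: "finite B" and orth: "pairwise orthogonal B" and nrm: "\<And>b. b \<in> B \<Longrightarrow> norm b = 1"
    and u: "u \<in> span B"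
  shows "u = (\<Sum>b\<in>B. (u \<bullet> b) *\<^sub>R b)"
proof -
  define r where "r = u - (\<Sum>b\<in>B. (u \<bullet> b) *\<^sub>R b)"
  have bb: "b \<bullet> b' = (if b = b' then 1 else 0)" if "b \<in> B" "b' \<in> B" for b b'
  proof (cases "b = b'")
    case True then show ?thesis using nrm[OF that(1)] by (simp add: dot_square_norm)
  next
    case False then show ?thesis using orth that by (auto simp: pairwise_def orthogonal_def)
  qed
  have rB: "orthogonal r b'" if b': "b' \<in> B" for b'
  proof -
    have "(\<Sum>b\<in>B. (u \<bullet> b) *\<^sub>R b) \<bullet> b' = (\<Sum>b\<in>B. (u \<bullet> b) * (b \<bullet> b'))"
      by (simp add: inner_sum_left)
    also have "\<dots> = (\<Sum>b\<in>B. (if b = b' then u \<bullet> b else 0))"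
      by (rule sum.cong[OF refl]) (simp add: bb b')
    also have "\<dots> = u \<bullet> b'" using fin b' by simp
    finally show ?thesis by (simp add: r_def orthogonal_def inner_diff_left)
  qed
  have "r \<in> span B" unfolding r_def
    by (intro span_diff u span_sum span_scale span_base)
  then have "orthogonal r r" by (rule orthogonal_to_span) (use rB in auto)
  then have "r = 0" by (simp add: orthogonal_self)
  then show ?thesis by (simp add: r_def)
qed

lemma riesz_solve:
  fixes T :: "'a::euclidean_space set" and A :: "'a \<Rightarrow> 'a \<Rightarrow> real" and J :: "'a \<Rightarrow> 'a"
  assumes T: "subspace T"
    and A1: "\<And>u. linear (\<lambda>v. A v u)" and A2: "\<And>v. linear (\<lambda>u. A v u)"
    and pos: "\<And>w. w \<in> T \<Longrightarrow> w \<noteq> 0 \<Longrightarrow> A w w > 0" and linJ: "linear J"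
  shows "\<exists>V. linear V \<and> (\<forall>h. V h \<in> T) \<and> (\<forall>h u. u \<in> T \<longrightarrow> A (V h) u = h \<bullet> J u)"
proof -
  obtain B where B: "B \<subseteq> T" "pairwise orthogonal B" "\<And>x. x \<in> B \<Longrightarrow> norm x = 1"
    "independent B" "card B = dim T" "span B = T"
    using orthonormal_basis_subspace[OF T] by blast
  have fin: "finite B" using B(4) by (rule independent_imp_finite)
  have exp: "u = (\<Sum>b\<in>B. (u \<bullet> b) *\<^sub>R b)" if "u \<in> T" for u
    by (rule ortho_expand[OF fin B(2) B(3)]) (use that B(6) in auto)
  have bb: "b \<bullet> b' = (if b = b' then 1 else 0)" if "b \<in> B" "b' \<in> B" for b b'
  proof (cases "b = b'")
    case True then show ?thesis using B(3)[OF that(1)] by (simp add: dot_square_norm)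
  next
    case False then show ?thesis using B(2) that by (auto simp: pairwise_def orthogonal_def)
  qed
  define P where "P x = (\<Sum>b\<in>B. (x \<bullet> b) *\<^sub>R b)" for x
  have PT: "P x \<in> T" for x unfolding P_def using B(1) T
    by (intro subspace_sum subspace_scale) auto
  have Pb: "P x \<bullet> b' = x \<bullet> b'" if "b' \<in> B" for x b'
  proof -
    have "P x \<bullet> b' = (\<Sum>b\<in>B. (x \<bullet> b) * (b \<bullet> b'))" by (simp add: P_def inner_sum_left)
    also have "\<dots> = (\<Sum>b\<in>B. (if b = b' then x \<bullet> b else 0))" by (rule sum.cong[OF refl]) (simp add: bb that)
    also have "\<dots> = x \<bullet> b'" using fin that by simp
    finally show ?thesis .
  qed
  have perp: "(x - P x) \<bullet> u = 0" if "u \<in> T" for x u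
  proof -
    have "(x - P x) \<bullet> u = (\<Sum>b\<in>B. (u \<bullet> b) * ((x - P x) \<bullet> b))"
      by (subst exp[OF that]) (simp add: inner_sum_right)
    also have "\<dots> = 0" by (simp add: inner_diff_left Pb)
    finally show ?thesis .
  qed
  have linP: "linear P" unfolding P_def
    by (intro linear_compose_sum) (auto simp: linear_iff inner_add_left scaleR_add_left)
  define \<Lambda> where "\<Lambda> w = (\<Sum>b\<in>B. A w b *\<^sub>R b) + (w - P w)" for w
  have lc: "linear (\<lambda>w. A w b *\<^sub>R b)" for b using A1[of b] unfolding linear_iff by (simp add: scaleR_add_left)
  have ls: "linear (\<lambda>w. \<Sum>b\<in>B. A w b *\<^sub>R b)" by (rule linear_compose_sum) (simp add: lc)
  have lin\<Lambda>: "linear \<Lambda>" using ls linP unfolding \<Lambda>_def linear_iff by (simp add: algebra_simps scaleR_diff_right)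
  have sT: "(\<Sum>b\<in>B. c b *\<^sub>R b) \<in> T" for c using B(1) T by (intro subspace_sum subspace_scale) auto
  have Awb: "A w u = (\<Sum>b\<in>B. (u \<bullet> b) * A w b)" if "u \<in> T" for w u
  proof -
    have "A w u = A w (\<Sum>b\<in>B. (u \<bullet> b) *\<^sub>R b)" using exp[OF that] by simp
    also have "\<dots> = (\<Sum>b\<in>B. (u \<bullet> b) * A w b)"
      unfolding linear_sum[OF A2[of w]] o_def linear_cmul[OF A2[of w]] by simp
    finally show ?thesis .
  qed
  have split0: "a = 0 \<and> c = 0" if "a \<in> T" "\<forall>u\<in>T. c \<bullet> u = 0" "a + c = 0" for a c :: 'a
  proof -
    have "c = - a" using that(3) by (simp add: eq_neg_iff_add_eq_0 add.commute)
    then have "a \<bullet> a = 0" using that(1,2) by (metis inner_minus_left neg_equal_0_iff_equal)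
    then show ?thesis using \<open>c = - a\<close> by simp
  qed
  have sumb: "(\<Sum>b\<in>B. c b *\<^sub>R b) \<bullet> b' = c b'" if "b' \<in> B" for c b'
  proof -
    have "(\<Sum>b\<in>B. c b *\<^sub>R b) \<bullet> b' = (\<Sum>b\<in>B. c b * (b \<bullet> b'))" by (simp add: inner_sum_left)
    also have "\<dots> = (\<Sum>b\<in>B. (if b = b' then c b else 0))" by (rule sum.cong[OF refl]) (simp add: bb that)
    also have "\<dots> = c b'" using fin that by simp
    finally show ?thesis .
  qed
  have inj: "inj \<Lambda>"
    unfolding linear_injective_0[OF lin\<Lambda>]
  proof (intro allI impI)
    fix w assume "\<Lambda> w = 0"
    then have z: "(\<Sum>b\<in>B. A w b *\<^sub>R b) = 0 \<and> w - P w = 0"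
      using split0[OF sT] perp unfolding \<Lambda>_def by blast
    then have wT: "w \<in> T" using PT by (metis eq_iff_diff_eq_0)
    have "A w b = 0" if "b \<in> B" for b using sumb[OF that, of "\<lambda>b. A w b"] z by simp
    then have "A w w = 0" using Awb[OF wT] by simp
    then show "w = 0" using pos[OF wT] by fastforce
  qed
  have surj: "surj \<Lambda>" by (rule linear_injective_imp_surjective[OF lin\<Lambda> inj]) simp
  have W: "\<exists>w. w \<in> T \<and> (\<forall>u\<in>T. A w u = b \<bullet> u)" if b: "b \<in> B" for b
  proof -
    obtain w where w: "\<Lambda> w = b" using surj by (metis surjD)
    have bT: "b \<in> T" using b B(1) by auto
    have "(\<Sum>b\<in>B. A w b *\<^sub>R b) - b + (w - P w) = 0" using w by (simp add: \<Lambda>_def algebra_simps)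
    then have "(\<Sum>b\<in>B. A w b *\<^sub>R b) - b = 0 \<and> w - P w = 0"
      by (intro split0) (use sT bT T perp in \<open>auto simp: subspace_diff\<close>)
    then have s: "(\<Sum>b\<in>B. A w b *\<^sub>R b) = b" and wT: "w \<in> T" using PT by (auto simp: eq_iff_diff_eq_0[symmetric]) (metis eq_iff_diff_eq_0)
    have "A w b' = b \<bullet> b'" if "b' \<in> B" for b' using sumb[OF that, of "\<lambda>b. A w b"] s by simp
    then have "A w u = b \<bullet> u" if "u \<in> T" for u
    proof -
      have "A w u = (\<Sum>b'\<in>B. (u \<bullet> b') * (b \<bullet> b'))" using Awb[OF that] \<open>\<And>b'. b' \<in> B \<Longrightarrow> A w b' = b \<bullet> b'\<close> by simp
      also have "\<dots> = b \<bullet> (\<Sum>b'\<in>B. (u \<bullet> b') *\<^sub>R b')" by (simp add: inner_sum_right mult.commute)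
      also have "\<dots> = b \<bullet> u" using exp[OF that] by simp
      finally show ?thesis .
    qed
    then show ?thesis using wT by blast
  qed
  then obtain Wf where Wf: "\<And>b. b \<in> B \<Longrightarrow> Wf b \<in> T \<and> (\<forall>u\<in>T. A (Wf b) u = b \<bullet> u)" by metis
  define V where "V h = (\<Sum>b\<in>B. (h \<bullet> J b) *\<^sub>R Wf b)" for h
  show ?thesis
  proof (intro exI[of _ V] conjI allI impI)
    show "linear V" unfolding V_def
      by (intro linear_compose_sum) (auto simp: linear_iff inner_add_left scaleR_add_left)
    show "V h \<in> T" for h unfolding V_def using Wf T by (intro subspace_sum subspace_scale) auto
    fix h u assume u: "u \<in> T"
    have "A (V h) u = (\<Sum>b\<in>B. (h \<bullet> J b) * A (Wf b) u)"
      unfolding V_def linear_sum[OF A1[of u]] o_def linear_cmul[OF A1[of u]] by simp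
    also have "\<dots> = (\<Sum>b\<in>B. (h \<bullet> J b) * (b \<bullet> u))" using Wf u by simp
    also have "\<dots> = h \<bullet> J (\<Sum>b\<in>B. (u \<bullet> b) *\<^sub>R b)"
      unfolding linear_sum[OF linJ] o_def linear_cmul[OF linJ] by (simp add: inner_sum_right inner_commute mult.commute)
    also have "\<dots> = h \<bullet> J u" using exp[OF u] by simp
    finally show "A (V h) u = h \<bullet> J u" .
  qed
qed


lemma exists_min:
  fixes M :: "'a::euclidean_space set"
  assumes "compact M" "M \<noteq> {}"
  shows "\<exists>m. is_minimizer M x m"
proof -
  obtain m where m: "m \<in> M" "\<And>y. y \<in> M \<Longrightarrow> dist x m \<le> dist x y"
    using distance_attains_inf[OF compact_imp_closed[OF assms(1)] assms(2)] by blast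
  have "(norm (m - x))\<^sup>2 \<le> (norm (y - x))\<^sup>2" if "y \<in> M" for y
    using m(2)[OF that] by (simp add: dist_norm norm_minus_commute power_mono)
  then show ?thesis using m(1) by (auto simp: is_minimizer_def)
qed

lemma arith1:
  fixes \<kappa> \<eta> a b c CV :: real
  assumes "\<kappa> > 0" "\<eta> > 0" "\<eta> \<le> \<kappa>/2" "a \<ge> 0" "c \<ge> 0" "\<kappa> * a\<^sup>2 \<le> \<eta> * (b + c) * a" "b \<le> CV * c + a" "CV \<ge> 0"
  shows "\<kappa> * a \<le> 2 * \<eta> * (CV + 1) * c"
proof (cases "a = 0")
  case True then show ?thesis using assms by simp
next
  case False
  then have ap: "a > 0" using assms by simp
  have "\<kappa> * a * a \<le> (\<eta> * (b + c)) * a" using assms(6) by (simp add: power2_eq_square mult.assoc)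
  then have "\<kappa> * a \<le> \<eta> * (b + c)" using ap by simp
  also have "\<dots> \<le> \<eta> * (CV * c + a + c)" using assms by (intro mult_left_mono) auto
  finally have "(\<kappa> - \<eta>) * a \<le> \<eta> * (CV + 1) * c" by (simp add: algebra_simps)
  moreover have "(\<kappa> / 2) * a \<le> (\<kappa> - \<eta>) * a" using assms ap by (intro mult_right_mono) auto
  ultimately have "(\<kappa> / 2) * a \<le> \<eta> * (CV + 1) * c" by linarith
  then show ?thesis by simp
qed

context cset
begin

lemma beta_lin1: "linear (\<lambda>v. \<beta> y v u)" unfolding linear_iff by (simp add: beta_add1 beta_scale1)
lemma beta_lin2: "linear (\<lambda>u. \<beta> y v u)" unfolding linear_iff by (simp add: beta_add2 beta_scale2)
lemma J_lin: "linear J" unfolding linear_iff by (simp add: J_add J_scale)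

lemma k_est:
  assumes e: "e > 0"
  shows "\<exists>d>0. \<forall>z u. norm z < d \<longrightarrow> u \<in> T \<longrightarrow> \<bar>(\<phi> z - t) \<bullet> (u + D [u] z) - \<beta> t z u\<bar> \<le> e * norm z * norm u"
proof -
  define \<Phi> where "\<Phi> z = (\<Sum>i\<in>Basis. ((\<phi> z - t) \<bullet> (i + D [i] z)) *\<^sub>R i)" for z
  have dterm: "((\<lambda>z. (\<phi> z - t) \<bullet> (i + D [i] z)) has_derivative (\<lambda>v. \<beta> t v i)) (at 0)" for i
  proof -
    have "((\<lambda>z. (\<phi> z - t) \<bullet> (i + D [i] z)) has_derivative
        (\<lambda>v. (\<phi> 0 - t) \<bullet> D [v, i] 0 + (v + D [v] 0) \<bullet> (i + D [i] 0))) (at 0)"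
    proof (rule has_derivative_inner)
      show "((\<lambda>z. \<phi> z - t) has_derivative (\<lambda>h. h + D [h] 0)) (at 0)"
        by (rule has_derivative_eq_rhs[OF has_derivative_diff[OF phi_d has_derivative_const]]) simp
      show "((\<lambda>z. i + D [i] z) has_derivative (\<lambda>v. D [v, i] 0)) (at 0)"
        by (rule has_derivative_eq_rhs[OF has_derivative_add[OF has_derivative_const D1_d]]) simp
    qed
    then show ?thesis by (rule has_derivative_eq_rhs) (auto simp: \<beta>_def J_def \<phi>0 inner_commute)
  qed
  have dPhi: "(\<Phi> has_derivative (\<lambda>v. \<Sum>i\<in>Basis. \<beta> t v i *\<^sub>R i)) (at 0)"
    unfolding \<Phi>_def by (intro has_derivative_sum has_derivative_scaleR_left dterm)
  have Phi_u: "\<Phi> z \<bullet> u = (\<phi> z - t) \<bullet> (u + D [u] z)" for z u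
  proof -
    have "u + D [u] z = (\<Sum>i\<in>Basis. (u \<bullet> i) *\<^sub>R (i + D [i] z))"
      by (subst D1_expand) (simp add: scaleR_add_right sum.distrib euclidean_representation)
    then have "(\<phi> z - t) \<bullet> (u + D [u] z) = (\<Sum>i\<in>Basis. (u \<bullet> i) * ((\<phi> z - t) \<bullet> (i + D [i] z)))"
      by (simp add: inner_sum_right)
    moreover have "\<Phi> z \<bullet> u = (\<Sum>i\<in>Basis. (u \<bullet> i) * ((\<phi> z - t) \<bullet> (i + D [i] z)))"
      unfolding \<Phi>_def inner_sum_left inner_scaleR_left by (rule sum.cong) (auto simp: inner_commute)
    ultimately show ?thesis by simp
  qed
  have DPhi_u: "(\<Sum>i\<in>Basis. \<beta> t v i *\<^sub>R i) \<bullet> u = \<beta> t v u" for v u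
  proof -
    have "\<beta> t v u = (\<Sum>i\<in>Basis. (u \<bullet> i) * \<beta> t v i)"
      using lin_expand[OF beta_lin2[of t v], of u] by simp
    moreover have "(\<Sum>i\<in>Basis. \<beta> t v i *\<^sub>R i) \<bullet> u = (\<Sum>i\<in>Basis. (u \<bullet> i) * \<beta> t v i)"
      unfolding inner_sum_left inner_scaleR_left by (rule sum.cong) (auto simp: inner_commute)
    ultimately show ?thesis by simp
  qed
  have Phi0: "\<Phi> 0 \<bullet> u = 0" if "u \<in> T" for u
    using crit[of 0 t u] \<phi>0 \<mu>U tmin that subT Phi_u[of 0 u] by (simp add: subspace_0)
  obtain d where d: "d > 0" "\<And>z. norm (z - 0) < d \<Longrightarrow>
      norm (\<Phi> z - \<Phi> 0 - (\<Sum>i\<in>Basis. \<beta> t (z - 0) i *\<^sub>R i)) \<le> e * norm (z - 0)"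
    using dPhi e unfolding has_derivative_at_alt by blast
  show ?thesis
  proof (intro exI[of _ d] conjI allI impI)
    fix z u :: 'a assume z: "norm z < d" and u: "u \<in> T"
    have "(\<phi> z - t) \<bullet> (u + D [u] z) - \<beta> t z u = (\<Phi> z - \<Phi> 0 - (\<Sum>i\<in>Basis. \<beta> t z i *\<^sub>R i)) \<bullet> u"
      using Phi_u[of z u] DPhi_u[of z u] Phi0[OF u] by (simp add: inner_diff_left)
    also have "\<bar>\<dots>\<bar> \<le> norm (\<Phi> z - \<Phi> 0 - (\<Sum>i\<in>Basis. \<beta> t z i *\<^sub>R i)) * norm u"
      by (rule Cauchy_Schwarz_ineq2)
    also have "\<dots> \<le> e * norm z * norm u" using d(2)[of z] z by (simp add: mult_right_mono)
    finally show "\<bar>(\<phi> z - t) \<bullet> (u + D [u] z) - \<beta> t z u\<bar> \<le> e * norm z * norm u" .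
  qed (use d in auto)
qed

lemma D_est:
  assumes e: "e > 0"
  shows "\<exists>d>0. \<forall>v u. norm v < d \<longrightarrow> norm (D [u] v - D [u] 0) \<le> e * norm u"
proof -
  define f where "f v = (\<Sum>i\<in>Basis. norm (D [i] v - D [i] 0))" for v
  have "isCont f 0" unfolding f_def by (intro continuous_intros)
  then have "(f \<longlongrightarrow> 0) (at 0)" by (simp add: isCont_def f_def)
  then have "\<forall>\<^sub>F v in at 0. f v < e" using e by (rule order_tendstoD)
  then obtain d where d: "d > 0" "\<And>v. v \<noteq> 0 \<Longrightarrow> dist v 0 < d \<Longrightarrow> f v < e"
    unfolding eventually_at by blast
  show ?thesis
  proof (intro exI[of _ d] conjI allI impI)
    fix v u :: 'a assume v: "norm v < d"
    have fv: "f v \<le> e" using d(2)[of v] v e by (cases "v = 0") (auto simp: f_def)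
    have "D [u] v - D [u] 0 = (\<Sum>i\<in>Basis. (u \<bullet> i) *\<^sub>R (D [i] v - D [i] 0))"
      by (simp add: D1_expand[of u v] D1_expand[of u 0] scaleR_diff_right sum_subtractf)
    then have "norm (D [u] v - D [u] 0) \<le> (\<Sum>i\<in>Basis. norm ((u \<bullet> i) *\<^sub>R (D [i] v - D [i] 0)))"
      by (simp only: norm_sum)
    also have "\<dots> \<le> (\<Sum>i\<in>Basis. norm u * norm (D [i] v - D [i] 0))"
      by (intro sum_mono) (simp add: Basis_le_norm mult_right_mono)
    also have "\<dots> = norm u * f v" by (simp add: f_def sum_distrib_left)
    also have "\<dots> \<le> norm u * e" using fv by (simp add: mult_left_mono)
    finally show "norm (D [u] v - D [u] 0) \<le> e * norm u" by (simp add: mult.commute)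
  qed (use d in auto)
qed

lemma deriv_main:
  assumes uniq_t: "\<And>m. is_minimizer M t m \<Longrightarrow> m = \<mu>"
    and kap: "\<kappa> > 0" "\<And>w. w \<in> T \<Longrightarrow> q 0 t w \<ge> \<kappa> * (norm (J w))\<^sup>2"
    and nb: "\<delta>0 > 0" "\<And>x m m'. dist x t < \<delta>0 \<Longrightarrow> is_minimizer M x m \<Longrightarrow> is_minimizer M x m' \<Longrightarrow> m' = m"
  shows "\<exists>L. (nearest M has_derivative L) (at t) \<and> onorm L \<le> 1/\<kappa>"
proof -
  have Mne: "M \<noteq> {}" using \<mu>M by auto
  have key: "\<kappa> * (norm (J w))\<^sup>2 \<le> \<beta> t w w" if "w \<in> T" for w using kap(2)[OF that] q0_beta by simp
  have pos: "\<beta> t w w > 0" if "w \<in> T" "w \<noteq> 0" for w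
  proof -
    have "(norm w)\<^sup>2 > 0" using that by simp
    then have "(norm (J w))\<^sup>2 > 0" using J_ge[OF that(1)] by linarith
    then show ?thesis using key[OF that(1)] kap(1) by (smt (verit) mult_pos_pos)
  qed
  obtain V where V: "linear V" "\<And>h. V h \<in> T" "\<And>h u. u \<in> T \<Longrightarrow> \<beta> t (V h) u = h \<bullet> J u"
    using riesz_solve[OF subT beta_lin1 beta_lin2 pos J_lin] by blast
  define L where "L = (\<lambda>h. J (V h))"
  have linL: "linear L" unfolding L_def using linear_compose[OF V(1) J_lin] by (simp add: o_def)
  have blL: "bounded_linear L" using linL by (simp add: linear_conv_bounded_linear)
  obtain CV where CV: "CV > 0" "\<And>h. norm (V h) \<le> norm h * CV"
    using bounded_linear.pos_bounded[OF linear_conv_bounded_linear[THEN iffD1, OF V(1)]] by blast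
  obtain CJ where CJ: "CJ > 0" "\<And>h. norm (J h) \<le> norm h * CJ"
    using bounded_linear.pos_bounded[OF linear_conv_bounded_linear[THEN iffD1, OF J_lin]] by blast
  have onL: "onorm L \<le> 1/\<kappa>"
  proof (rule onorm_le)
    fix h
    define w where "w = V h"
    have wT: "w \<in> T" using V(2) by (simp add: w_def)
    have "\<kappa> * (norm (J w))\<^sup>2 \<le> h \<bullet> J w" using key[OF wT] V(3)[OF wT] by (simp add: w_def)
    also have "\<dots> \<le> norm h * norm (J w)" by (rule order_trans[OF abs_ge_self Cauchy_Schwarz_ineq2])
    finally have "\<kappa> * (norm (J w)) * norm (J w) \<le> norm h * norm (J w)" by (simp add: power2_eq_square mult.assoc)
    then have "\<kappa> * norm (J w) \<le> norm h" by (cases "norm (J w) = 0") (auto simp: mult_le_cancel_right kap(1))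
    then show "norm (L h) \<le> 1/\<kappa> * norm h" using kap(1) by (simp add: L_def w_def field_simps)
  qed
  have \<pi>t: "nearest M t = \<mu>" unfolding nearest_def using tmin uniq_t by (rule the_equality)
  have \<pi>x: "nearest M x = m" if "dist x t < \<delta>0" "is_minimizer M x m" for x m
    unfolding nearest_def using that nb(2) by (intro the_equality) blast+
  have "(nearest M has_derivative L) (at t)"
    unfolding has_derivative_at_alt
  proof (intro conjI blL allI impI)
    fix e :: real assume e: "e > 0"
    define C1 where "C1 = CV + 2 * (CV + 1) / \<kappa>"
    define K2 where "K2 = C1 + 2 * CJ * (CV + 1) / \<kappa>"
    have C1p: "C1 > 0" using CV kap by (simp add: C1_def add_pos_nonneg)
    have K2p: "K2 > 0" using C1p CJ CV kap by (simp add: K2_def add_pos_nonneg)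
    define \<eta> where "\<eta> = min (min (\<kappa>/2) 1) (e / K2)"
    have \<eta>: "\<eta> > 0" "\<eta> \<le> \<kappa>/2" "\<eta> \<le> 1" "\<eta> * K2 \<le> e"
    proof -
      show "\<eta> > 0" using kap e K2p by (simp add: \<eta>_def)
      show "\<eta> \<le> \<kappa>/2" unfolding \<eta>_def by (meson min.cobounded1 order_trans)
      show "\<eta> \<le> 1" unfolding \<eta>_def by (meson min.cobounded1 min.cobounded2 order_trans)
      have "\<eta> \<le> e / K2" by (simp add: \<eta>_def)
      then show "\<eta> * K2 \<le> e" using K2p by (simp add: le_divide_eq)
    qed
    obtain d1 where d1: "d1 > 0" "\<And>v. norm (v - 0) < d1 \<Longrightarrow> norm (\<phi> v - \<phi> 0 - ((v - 0) + D [v - 0] 0)) \<le> \<eta> * norm (v - 0)"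
      using phi_d[of 0] \<eta>(1) unfolding has_derivative_at_alt by blast
    obtain d2 where d2: "d2 > 0" "\<And>z u. norm z < d2 \<Longrightarrow> u \<in> T \<Longrightarrow> \<bar>(\<phi> z - t) \<bullet> (u + D [u] z) - \<beta> t z u\<bar> \<le> \<eta> * norm z * norm u"
      using k_est[OF \<eta>(1)] by blast
    obtain d3 where d3: "d3 > 0" "\<And>v u. norm v < d3 \<Longrightarrow> norm (D [u] v - D [u] 0) \<le> \<eta> * norm u"
      using D_est[OF \<eta>(1)] by blast
    obtain \<rho>U where \<rho>U: "\<rho>U > 0" "ball \<mu> \<rho>U \<subseteq> U" using openU \<mu>U open_contains_ball by blast
    define \<sigma> where "\<sigma> = min \<rho>U (min d1 (min d2 d3))"
    have \<sigma>: "\<sigma> > 0" "\<sigma> \<le> \<rho>U" "\<sigma> \<le> d1" "\<sigma> \<le> d2" "\<sigma> \<le> d3" using \<rho>U d1 d2 d3 by (auto simp: \<sigma>_def)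
    obtain \<delta>3 where \<delta>3: "\<delta>3 > 0" "\<And>x m. dist x t < \<delta>3 \<Longrightarrow> is_minimizer M x m \<Longrightarrow> dist m \<mu> < \<sigma>"
      using min_cont[OF uniq_t \<sigma>(1)] by blast
    show "\<exists>d>0. \<forall>x. norm (x - t) < d \<longrightarrow> norm (nearest M x - nearest M t - L (x - t)) \<le> e * norm (x - t)"
    proof (intro exI[of _ "min \<delta>0 \<delta>3"] conjI allI impI)
      show "min \<delta>0 \<delta>3 > 0" using nb(1) \<delta>3(1) by simp
      fix x assume x: "norm (x - t) < min \<delta>0 \<delta>3"
      define h where "h = x - t"
      obtain m where xm: "is_minimizer M x m" using exists_min[OF cM Mne] by blast
      have dx: "dist x t < \<delta>0" "dist x t < \<delta>3" using x by (auto simp: dist_norm)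
      have \<pi>m: "nearest M x = m" using \<pi>x[OF dx(1) xm] .
      have dm: "dist m \<mu> < \<sigma>" using \<delta>3(2)[OF dx(2) xm] .
      have mM: "m \<in> M" using xm by (simp add: is_minimizer_def)
      have mU: "m \<in> U" using dm \<sigma> \<rho>U by (auto simp: dist_commute)
      obtain v where v: "v \<in> T" "m = \<phi> v" "norm v \<le> norm (m - \<mu>)" using chart_pt[OF mM mU] by blast
      have nv: "norm v < \<sigma>" using v(3) dm by (simp add: dist_norm)
      define w where "w = v - V h"
      have wT: "w \<in> T" using v(1) V(2) subT by (simp add: w_def subspace_diff)
      have crw: "(\<phi> v - x) \<bullet> (w + D [w] v) = 0" using crit[OF v(1) _ _ wT] v(2) mU xm by simp
      have bw: "\<beta> t w w = \<beta> t v w - h \<bullet> J w"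
        unfolding w_def using linear_diff[OF beta_lin1[of t w], of v "V h"] V(3)[OF wT] by (simp add: w_def)
      have e2: "\<bar>(\<phi> v - t) \<bullet> (w + D [w] v) - \<beta> t v w\<bar> \<le> \<eta> * norm v * norm w"
        using d2(2)[OF _ wT] nv \<sigma> by simp
      have e3: "norm (D [w] v - D [w] 0) \<le> \<eta> * norm w" using d3(2) nv \<sigma> by simp
      have "\<beta> t w w = - ((\<phi> v - t) \<bullet> (w + D [w] v) - \<beta> t v w) + h \<bullet> (D [w] v - D [w] 0)"
      proof -
        have "(\<phi> v - t) \<bullet> (w + D [w] v) = h \<bullet> (w + D [w] v)"
          using crw by (simp add: h_def inner_diff_left algebra_simps)
        then show ?thesis unfolding bw J_def by (simp add: inner_diff_right inner_add_right)
      qed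
      also have "\<dots> \<le> \<eta> * norm v * norm w + norm h * (\<eta> * norm w)"
      proof -
        have "h \<bullet> (D [w] v - D [w] 0) \<le> norm h * norm (D [w] v - D [w] 0)"
          by (rule order_trans[OF abs_ge_self Cauchy_Schwarz_ineq2])
        also have "\<dots> \<le> norm h * (\<eta> * norm w)" using e3 by (simp add: mult_left_mono)
        finally show ?thesis using e2 by linarith
      qed
      finally have bww: "\<beta> t w w \<le> \<eta> * (norm v + norm h) * norm w" by (simp add: algebra_simps)
      have kw: "\<kappa> * (norm w)\<^sup>2 \<le> \<beta> t w w"
      proof -
        have "\<kappa> * (norm w)\<^sup>2 \<le> \<kappa> * (norm (J w))\<^sup>2" using J_ge[OF wT] kap(1) by simp
        then show ?thesis using key[OF wT] by linarith
      qed
      have vb: "norm v \<le> CV * norm h + norm w"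
      proof -
        have "v = V h + w" by (simp add: w_def)
        then have "norm v \<le> norm (V h) + norm w" by (metis norm_triangle_ineq)
        then show ?thesis using CV(2)[of h] by (simp add: mult.commute)
      qed
      have aw: "\<kappa> * norm w \<le> 2 * \<eta> * (CV + 1) * norm h"
        by (rule arith1[OF kap(1) \<eta>(1) \<eta>(2) _ _ _ vb]) (use kw bww CV in auto)
      have wb: "norm w \<le> (2 * (CV + 1) / \<kappa>) * \<eta> * norm h"
        using aw kap(1) by (simp add: field_simps)
      have vb2: "norm v \<le> C1 * norm h"
      proof -
        have "norm w \<le> (2 * (CV + 1) / \<kappa>) * norm h"
        proof -
          have "(2 * (CV + 1) / \<kappa>) * \<eta> * norm h \<le> (2 * (CV + 1) / \<kappa>) * 1 * norm h"
            using \<eta> CV kap by (intro mult_right_mono mult_left_mono) auto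
          then show ?thesis using wb by simp
        qed
        then show ?thesis using vb by (simp add: C1_def algebra_simps)
      qed
      have "nearest M x - nearest M t - L (x - t) = (\<phi> v - \<phi> 0 - (v + D [v] 0)) + J w"
        unfolding \<pi>m \<pi>t L_def h_def[symmetric]
        using linear_diff[OF J_lin, of v "V h"] v(2) \<phi>0 by (simp add: w_def J_def algebra_simps)
      then have "norm (nearest M x - nearest M t - L (x - t)) \<le> \<eta> * norm v + CJ * norm w"
        using norm_triangle_ineq[of "\<phi> v - \<phi> 0 - (v + D [v] 0)" "J w"] d1(2)[of v] nv \<sigma> CJ(2)[of w]
        by (simp add: mult.commute)
      also have "\<dots> \<le> \<eta> * (C1 * norm h) + CJ * ((2 * (CV + 1) / \<kappa>) * \<eta> * norm h)"
        using vb2 wb \<eta> CJ by (intro add_mono mult_left_mono) auto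
      also have "\<dots> = (\<eta> * K2) * norm h" by (simp add: K2_def algebra_simps)
      also have "\<dots> \<le> e * norm h" using \<eta>(4) by (simp add: mult_right_mono)
      finally show "norm (nearest M x - nearest M t - L (x - t)) \<le> e * norm (x - t)" by (simp add: h_def)
    qed
  qed
  then show ?thesis using onL by blast
qed

end


lemma infdist_geI:
  assumes "A \<noteq> {}" "\<And>a. a \<in> A \<Longrightarrow> \<delta> \<le> dist x a"
  shows "\<delta> \<le> infdist x A"
  unfolding infdist_def using assms by (auto intro!: cINF_greatest)

theorem lemma3p1:
  fixes M :: "'a::euclidean_space set" and t :: 'a
  assumes "compact M" and "M \<noteq> {}" and "smooth_submanifold M"
    and "t \<notin> cutlocus M"
  shows "nearest M differentiable (at t) \<and>
         onorm (frechet_derivative (nearest M) (at t))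
           \<le> infdist t M / infdist t (cutlocus M) + 1"
proof -
  note cM = assms(1) and Mne = assms(2) and sm = assms(3) and tnc = assms(4)
  obtain \<mu> where tmin: "is_minimizer M t \<mu>" using exists_min[OF cM Mne] by blast
  have uniq: "\<And>m. is_minimizer M t m \<Longrightarrow> m = \<mu>" using tnc tmin unfolding cutlocus_def by blast
  have \<mu>M: "\<mu> \<in> M" using tmin by (simp add: is_minimizer_def)
  obtain U T g where ch: "graph_chart M \<mu> U T g" using sm \<mu>M unfolding smooth_submanifold_def by blast
  obtain D where D: "\<forall>x\<in>UNIV. D [] x = g x" "\<forall>vs. \<forall>x\<in>UNIV. (D vs has_derivative (\<lambda>h. D (h # vs) x)) (at x)"
    using ch unfolding graph_chart_def smooth_on_def by blast
  interpret cset M t \<mu> U T g D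
    using cM tmin ch D by (unfold_locales) auto
  define r where "r = norm (t - \<mu>)"
  have infM: "infdist t M = r"
  proof (rule antisym)
    show "infdist t M \<le> r" using infdist_le[OF \<mu>M, of t] by (simp add: r_def dist_norm)
    show "r \<le> infdist t M"
    proof (rule infdist_geI[OF Mne])
      fix m assume "m \<in> M"
      then have "(norm (\<mu> - t))\<^sup>2 \<le> (norm (m - t))\<^sup>2" using tmin by (simp add: is_minimizer_def)
      then have "norm (\<mu> - t) \<le> norm (m - t)" using power2_le_imp_le by fastforce
      then show "r \<le> dist t m" by (simp add: r_def dist_norm norm_minus_commute)
    qed
  qed
  have "\<exists>l2 \<kappa>. l2 \<in> Lam \<and> l2 > 1 \<and> \<kappa> > 0 \<and> (\<forall>w\<in>T. q 0 t w \<ge> \<kappa> * (norm (J w))\<^sup>2) \<and>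
      (\<forall>\<delta>>0. (\<forall>c\<in>cutlocus M. \<delta> \<le> dist t c) \<longrightarrow> 1/\<kappa> \<le> infdist t M / infdist t (cutlocus M) + 1)"
  proof (cases "bdd_above Lam")
    case True
    obtain l1 where l1: "l1 \<in> Lam" "l1 > 1" "yl l1 \<in> cutlocus M" using Lam_bdd_case[OF tnc True] by blast
    have rp: "r > 0"
    proof (rule ccontr)
      assume "\<not> r > 0"
      then have "t = \<mu>" by (simp add: r_def)
      then have "yl l1 = t" unfolding yl_def by simp
      then show False using l1(3) tnc by simp
    qed
    show ?thesis
    proof (rule exI[of _ l1], rule exI[of _ "1 - 1/l1"], intro conjI ballI allI impI)
      show "l1 \<in> Lam" using l1 by simp
      show "l1 > 1" using l1 by simp
      show "1 - 1/l1 > 0" using l1(2) by simp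
      show "\<And>w. w \<in> T \<Longrightarrow> q 0 t w \<ge> (1 - 1/l1) * (norm (J w))\<^sup>2" by (rule kappa_from[OF l1(1)])
      fix \<delta> :: real assume \<delta>: "\<delta> > 0" "\<forall>c\<in>cutlocus M. \<delta> \<le> dist t c"
      define d where "d = infdist t (cutlocus M)"
      have dpos: "d > 0" unfolding d_def using infdist_geI[of "cutlocus M" \<delta> t] l1(3) \<delta> by fastforce
      have "d \<le> dist t (yl l1)" unfolding d_def by (rule infdist_le[OF l1(3)])
      also have "dist t (yl l1) = (l1 - 1) * r"
      proof -
        have "t - yl l1 = (1 - l1) *\<^sub>R (t - \<mu>)" by (simp add: yl_def algebra_simps)
        then show ?thesis using l1(2) by (simp add: dist_norm r_def)
      qed
      finally have dle: "d \<le> (l1 - 1) * r" .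
      have "1 / (l1 - 1) = r / ((l1 - 1) * r)" using rp l1(2) by simp
      also have "\<dots> \<le> r / d" using dpos dle rp by (intro divide_left_mono) auto
      finally have "1 / (l1 - 1) + 1 \<le> r / d + 1" by simp
      moreover have "1 / (1 - 1/l1) = 1 / (l1 - 1) + 1" using l1(2) by (simp add: field_simps)
      ultimately show "1 / (1 - 1/l1) \<le> infdist t M / infdist t (cutlocus M) + 1"
        by (simp add: infM d_def)
    qed
  next
    case False
    show ?thesis
    proof (rule exI[of _ 2], rule exI[of _ 1], intro conjI ballI allI impI)
      show "2 \<in> Lam" by (rule Lam_unbdd[OF False]) simp
      show "(2::real) > 1" "(1::real) > 0" by simp_all
      show "\<And>w. w \<in> T \<Longrightarrow> q 0 t w \<ge> 1 * (norm (J w))\<^sup>2" using kappa_unbdd[OF False] by simp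
      show "1 / 1 \<le> infdist t M / infdist t (cutlocus M) + 1"
        using infdist_nonneg[of t M] infdist_nonneg[of t "cutlocus M"] by simp
    qed
  qed
  then obtain l2 \<kappa> where l2: "l2 \<in> Lam" "l2 > 1" and kap: "\<kappa> > 0" "\<forall>w\<in>T. q 0 t w \<ge> \<kappa> * (norm (J w))\<^sup>2"
    and bnd: "\<And>\<delta>. \<delta> > 0 \<Longrightarrow> (\<forall>c\<in>cutlocus M. \<delta> \<le> dist t c) \<Longrightarrow> 1/\<kappa> \<le> infdist t M / infdist t (cutlocus M) + 1"
    by blast
  obtain \<delta>0 where \<delta>0: "\<delta>0 > 0" "\<And>x m. dist x t < \<delta>0 \<Longrightarrow> is_minimizer M x m \<Longrightarrow> is_minimizer M (m + ((1 + l2)/2) *\<^sub>R (x - m)) m"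
    using near_t_good[OF uniq l2] by blast
  have lgt: "(1 + l2) / 2 > 1" using l2 by simp
  have nb: "m' = m" if "dist x t < \<delta>0" "is_minimizer M x m" "is_minimizer M x m'" for x m m'
    using ray_unique[OF that(2) that(3) \<delta>0(2)[OF that(1,2)] lgt] .
  have farC: "\<forall>c\<in>cutlocus M. \<delta>0 \<le> dist t c"
  proof
    fix c assume c: "c \<in> cutlocus M"
    show "\<delta>0 \<le> dist t c"
    proof (rule ccontr)
      assume "\<not> \<delta>0 \<le> dist t c"
      then have dc: "dist c t < \<delta>0" by (simp add: dist_commute)
      obtain m where cm: "is_minimizer M c m" using exists_min[OF cM Mne] by blast
      have "c \<notin> cutlocus M" by (rule not_cut[OF cm \<delta>0(2)[OF dc cm] lgt])
      then show False using c by simp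
    qed
  qed
  have "\<exists>L. (nearest M has_derivative L) (at t) \<and> onorm L \<le> 1/\<kappa>"
  proof (rule deriv_main)
    show "\<And>m. is_minimizer M t m \<Longrightarrow> m = \<mu>" by (rule uniq)
    show "\<kappa> > 0" by (rule kap(1))
    show "\<And>w. w \<in> T \<Longrightarrow> q 0 t w \<ge> \<kappa> * (norm (J w))\<^sup>2" using kap(2) by blast
    show "\<delta>0 > 0" by (rule \<delta>0(1))
    show "\<And>x m m'. dist x t < \<delta>0 \<Longrightarrow> is_minimizer M x m \<Longrightarrow> is_minimizer M x m' \<Longrightarrow> m' = m"
      by (rule nb)
  qed
  then obtain L where L: "(nearest M has_derivative L) (at t)" "onorm L \<le> 1/\<kappa>" by blast
  have "frechet_derivative (nearest M) (at t) = L" using frechet_derivative_at[OF L(1)] by simp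
  moreover have "nearest M differentiable (at t)" using L(1) by (rule differentiableI)
  ultimately show ?thesis using L(2) bnd[OF \<delta>0(1) farC] by simp
qed


end
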